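(* Let $S_1,\ldots,S_n$ be Polish spaces, $\mu$ a Borel probability measure on $S=\prod_iS_i$ and $\mathcal{I}$ a collection of subsets of $\{1,\ldots,n\}$, and assume $\mu$ satisfies $\mathrm{LSI}_{(\partial,\mathcal{I})}(\sigma^2)$ with $\sigma^2>0$. Then for every $f\in L^\infty(\mu)$ and every $p\ge2$, \[ \|f\|_p^2-\|f\|_2^2\le2\sigma^2(p-2)\|\partial f\|_p^2 \qquad\text{and}\qquad \|f\|_p^2-\|f\|_2^2\le2\sigma^2(p-2)\|\mathfrak{h}f\|_p^2 . \]
   Context: For $I\subset\{1,\ldots,n\}$, $\overline{x_I}=(x_i)_{i\notin I}$, $(\overline{x_I},y_I)$ the point with coordinates $y_i$ ($i\in I$) and $x_i$ ($i\notin I$), and $(m_{\overline{x_I}})$ the disintegration of $\mu$ given $\overline{x_I}$ (probability measures on $\prod_{i\in I}S_i$ with $\int g\,d\mu=\int\int g(\overline{x_I},y_I)dm_{\overline{x_I}}(y_I)d\overline{\mu_I}(\overline{x_I})$, $\overline{\mu_I}$ the law of $\overline{x_I}$). For $I\in\mathcal{I}$: $\partial_If(x)=(\frac12\int(f(x)-f(\overline{x_I},y_I))^2dm_{\overline{x_I}}(y_I))^{1/2}$, $|\partial f|=(\sum_{I\in\mathcal{I}}(\partial_If)^2)^{1/2}$; $\mathfrak{h}_If(x)=\frac1{\sqrt2}\|f(\overline{x_I},y_I)-f(\overline{x_I},z_I)\|_{L^\infty(m_{\overline{x_I}}\otimes m_{\overline{x_I}})}$, $|\mathfrak{h}f|=(\sum_{I\in\mathcal{I}}(\mathfrak{h}_If)^2)^{1/2}$.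 $\|g\|_p=(\mathbb{E}_\mu|g|^p)^{1/p}$, $\|\partial f\|_p=\||\partial f|\|_p$, $\|\mathfrak{h}f\|_p=\||\mathfrak{h}f|\|_p$. $\mathrm{LSI}_{(\partial,\mathcal{I})}(\sigma^2)$ means $\mathrm{Ent}_\mu(f^2)\le2\sigma^2\mathbb{E}_\mu|\partial f|^2$ for all $f\in L^\infty(\mu)$, with $\mathrm{Ent}_\mu(g)=\mathbb{E}_\mu g\log g-\mathbb{E}_\mu g\log\mathbb{E}_\mu g$. *)

theory Defs
  imports "HOL-Analysis.Analysis" "HOL-Probability.Probability"
begin

definition Polish_top :: "'a topology \<Rightarrow> bool" where
  "Polish_top X \<longleftrightarrow> completely_metrizable_space X \<and> separable_space X"

definition borel_of :: "'a topology \<Rightarrow> 'a measure" where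
  "borel_of X = sigma (topspace X) {U. openin X U}"

definition prodM :: "(nat \<Rightarrow> 'a topology) \<Rightarrow> nat set \<Rightarrow> (nat \<Rightarrow> 'a) measure" where
  "prodM X J = Pi\<^sub>M J (\<lambda>i. borel_of (X i))"

definition xbar :: "nat \<Rightarrow> nat set \<Rightarrow> (nat \<Rightarrow> 'a) \<Rightarrow> (nat \<Rightarrow> 'a)" where
  "xbar n I x = restrict x ({1..n} - I)"

definition glue :: "nat \<Rightarrow> nat set \<Rightarrow> (nat \<Rightarrow> 'a) \<Rightarrow> (nat \<Rightarrow> 'a) \<Rightarrow> (nat \<Rightarrow> 'a)" where
  "glue n I x y = merge ({1..n} - I) I (xbar n I x, y)"

definition marg :: "(nat \<Rightarrow> 'a topology) \<Rightarrow> nat \<Rightarrow> (nat \<Rightarrow> 'a) measure \<Rightarrow> nat set \<Rightarrow> (nat \<Rightarrow> 'a) measure" where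
  "marg X n \<mu> I = distr \<mu> (prodM X ({1..n} - I)) (xbar n I)"

definition is_disintegration ::
  "(nat \<Rightarrow> 'a topology) \<Rightarrow> nat \<Rightarrow> (nat \<Rightarrow> 'a) measure \<Rightarrow> nat set \<Rightarrow> ((nat \<Rightarrow> 'a) \<Rightarrow> (nat \<Rightarrow> 'a) measure) \<Rightarrow> bool" where
  "is_disintegration X n \<mu> I m \<longleftrightarrow>
     m \<in> measurable (prodM X ({1..n} - I)) (subprob_algebra (prodM X I)) \<and>
     (\<forall>z \<in> space (prodM X ({1..n} - I)). prob_space (m z)) \<and>
     (\<forall>g \<in> borel_measurable \<mu>. (\<integral>\<^sup>+ x. g x \<partial>\<mu>) =
        (\<integral>\<^sup>+ z. (\<integral>\<^sup>+ y. g (merge ({1..n} - I) I (z, y)) \<partial>(m z)) \<partial>(marg X n \<mu> I)))"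

definition partialI :: "nat \<Rightarrow> nat set \<Rightarrow> ((nat \<Rightarrow> 'a) \<Rightarrow> (nat \<Rightarrow> 'a) measure) \<Rightarrow> ((nat \<Rightarrow> 'a) \<Rightarrow> real) \<Rightarrow> (nat \<Rightarrow> 'a) \<Rightarrow> real" where
  "partialI n I m f x = sqrt (1/2 * (\<integral>y. (f x - f (glue n I x y))\<^sup>2 \<partial>(m (xbar n I x))))"

definition grad_norm :: "nat \<Rightarrow> nat set set \<Rightarrow> (nat set \<Rightarrow> (nat \<Rightarrow> 'a) \<Rightarrow> (nat \<Rightarrow> 'a) measure) \<Rightarrow> ((nat \<Rightarrow> 'a) \<Rightarrow> real) \<Rightarrow> (nat \<Rightarrow> 'a) \<Rightarrow> real" where
  "grad_norm n \<I> m f x = sqrt (\<Sum>I\<in>\<I>. (partialI n I (m I) f x)\<^sup>2)"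

definition hI :: "nat \<Rightarrow> nat set \<Rightarrow> ((nat \<Rightarrow> 'a) \<Rightarrow> (nat \<Rightarrow> 'a) measure) \<Rightarrow> ((nat \<Rightarrow> 'a) \<Rightarrow> real) \<Rightarrow> (nat \<Rightarrow> 'a) \<Rightarrow> real" where
  "hI n I m f x = (1 / sqrt 2) * real_of_ereal
     (esssup (m (xbar n I x) \<Otimes>\<^sub>M m (xbar n I x))
        (\<lambda>(y, z). ereal \<bar>f (glue n I x y) - f (glue n I x z)\<bar>))"

definition h_norm :: "nat \<Rightarrow> nat set set \<Rightarrow> (nat set \<Rightarrow> (nat \<Rightarrow> 'a) \<Rightarrow> (nat \<Rightarrow> 'a) measure) \<Rightarrow> ((nat \<Rightarrow> 'a) \<Rightarrow> real) \<Rightarrow> (nat \<Rightarrow> 'a) \<Rightarrow> real" where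
  "h_norm n \<I> m f x = sqrt (\<Sum>I\<in>\<I>. (hI n I (m I) f x)\<^sup>2)"

definition Linfty :: "'b measure \<Rightarrow> ('b \<Rightarrow> real) \<Rightarrow> bool" where
  "Linfty \<mu> f \<longleftrightarrow> f \<in> borel_measurable \<mu> \<and> (\<exists>C. AE x in \<mu>. \<bar>f x\<bar> \<le> C)"

definition Lp_norm :: "'b measure \<Rightarrow> real \<Rightarrow> ('b \<Rightarrow> real) \<Rightarrow> real" where
  "Lp_norm \<mu> p g = (\<integral>x. \<bar>g x\<bar> powr p \<partial>\<mu>) powr (1 / p)"

text \<open>Entropy (with the convention 0 log 0 = 0, as ln 0 = 0 in Isabelle).\<close>
definition Ent :: "'b measure \<Rightarrow> ('b \<Rightarrow> real) \<Rightarrow> real" where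
  "Ent \<mu> g = (\<integral>x. g x * ln (g x) \<partial>\<mu>) - (\<integral>x. g x \<partial>\<mu>) * ln (\<integral>x. g x \<partial>\<mu>)"

definition LSI :: "nat \<Rightarrow> (nat \<Rightarrow> 'a) measure \<Rightarrow> nat set set \<Rightarrow> (nat set \<Rightarrow> (nat \<Rightarrow> 'a) \<Rightarrow> (nat \<Rightarrow> 'a) measure) \<Rightarrow> real \<Rightarrow> bool" where
  "LSI n \<mu> \<I> m \<sigma>2 \<longleftrightarrow>
     (\<forall>f. Linfty \<mu> f \<longrightarrow>
        Ent \<mu> (\<lambda>x. (f x)\<^sup>2) \<le> 2 * \<sigma>2 * (\<integral>x. (grad_norm n \<I> m f x)\<^sup>2 \<partial>\<mu>))"

end

theory Submission imports Defs begin

locale dsetup =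
  fixes X :: "nat \<Rightarrow> 'a topology" and n :: nat and \<mu> :: "(nat \<Rightarrow> 'a) measure"
    and I :: "nat set" and m :: "(nat \<Rightarrow> 'a) \<Rightarrow> (nat \<Rightarrow> 'a) measure"
  assumes P: "prob_space \<mu>" and S: "sets \<mu> = sets (prodM X {1..n})"
    and sub: "I \<subseteq> {1..n}" and D: "is_disintegration X n \<mu> I m"
begin

abbreviation "J \<equiv> {1..n} - I"
abbreviation "Z \<equiv> prodM X J"
abbreviation "Y \<equiv> prodM X I"

lemma space_mu: "space \<mu> = space (prodM X {1..n})"
  by (fact sets_eq_imp_space_eq[OF S])

lemma xbar_meas: "xbar n I \<in> measurable \<mu> Z"
proof -
  have "(\<lambda>f. restrict f J) \<in> measurable (prodM X {1..n}) Z"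
    unfolding prodM_def by (rule measurable_restrict_subset) auto
  moreover have "measurable \<mu> Z = measurable (prodM X {1..n}) Z"
    by (rule measurable_cong_sets[OF S refl])
  ultimately show ?thesis unfolding xbar_def[abs_def] by simp
qed

lemma merge_meas: "merge J I \<in> measurable (Z \<Otimes>\<^sub>M Y) \<mu>"
proof -
  have "merge J I \<in> measurable (Z \<Otimes>\<^sub>M Y) (Pi\<^sub>M (J \<union> I) (\<lambda>i. borel_of (X i)))"
    unfolding prodM_def by (rule measurable_merge)
  moreover have "J \<union> I = {1..n}" using sub by auto
  moreover have "measurable (Z \<Otimes>\<^sub>M Y) \<mu> = measurable (Z \<Otimes>\<^sub>M Y) (prodM X {1..n})"
    by (rule measurable_cong_sets[OF refl S])
  ultimately show ?thesis unfolding prodM_def by simp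
qed

lemma m_meas: "m \<in> measurable Z (subprob_algebra Y)"
  using D unfolding is_disintegration_def by blast

lemma m_prob: "z \<in> space Z \<Longrightarrow> prob_space (m z)"
  using D unfolding is_disintegration_def by blast

lemma sets_m: "z \<in> space Z \<Longrightarrow> sets (m z) = sets Y"
  using m_meas by (rule subprob_measurableD)

lemma space_m: assumes "z \<in> space Z" shows "space (m z) = space Y"
  by (fact sets_eq_imp_space_eq[OF sets_m[OF assms]])

lemma L_meas: "(\<lambda>x. m (xbar n I x)) \<in> measurable \<mu> (subprob_algebra Y)"
  using measurable_comp[OF xbar_meas m_meas] by (simp add: comp_def)

lemma glue_meas: "(\<lambda>(x,y). glue n I x y) \<in> measurable (\<mu> \<Otimes>\<^sub>M Y) \<mu>"
proof -
  have "(\<lambda>w. (xbar n I (fst w), snd w)) \<in> measurable (\<mu> \<Otimes>\<^sub>M Y) (Z \<Otimes>\<^sub>M Y)"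
    by (intro measurable_Pair measurable_compose[OF measurable_fst xbar_meas] measurable_snd)
  from measurable_comp[OF this merge_meas]
  have "(\<lambda>w. glue n I (fst w) (snd w)) \<in> measurable (\<mu> \<Otimes>\<^sub>M Y) \<mu>"
    unfolding glue_def comp_def .
  then show ?thesis by (simp only: split_beta')
qed

lemma xbar_glue[simp]: "xbar n I (glue n I x y) = xbar n I x"
  by (rule ext) (simp add: xbar_def glue_def merge_def restrict_def)

lemma glue_glue[simp]: "glue n I (glue n I x y) z = glue n I x z"
  by (metis glue_def xbar_glue)

lemma xbar_space: assumes "x \<in> space \<mu>" shows "xbar n I x \<in> space Z"
  by (fact measurable_space[OF xbar_meas assms])

lemma glue_space: "x \<in> space \<mu> \<Longrightarrow> y \<in> space Y \<Longrightarrow> glue n I x y \<in> space \<mu>"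
  using measurable_space[OF glue_meas, of "(x,y)"] by (simp add: space_pair_measure)

lemma kernel_meas:
  assumes "(\<lambda>(x,y). H x y) \<in> borel_measurable (\<mu> \<Otimes>\<^sub>M Y)"
  shows "(\<lambda>x. \<integral>\<^sup>+y. H x y \<partial>m (xbar n I x)) \<in> borel_measurable \<mu>"
  by (rule nn_integral_measurable_subprob_algebra2[OF assms L_meas])

lemma disint:
  assumes g: "g \<in> borel_measurable \<mu>"
  shows "(\<integral>\<^sup>+x. g x \<partial>\<mu>) = (\<integral>\<^sup>+x. (\<integral>\<^sup>+y. g (glue n I x y) \<partial>m (xbar n I x)) \<partial>\<mu>)"
proof -
  have "(\<integral>\<^sup>+x. g x \<partial>\<mu>) = (\<integral>\<^sup>+ z. (\<integral>\<^sup>+ y. g (merge J I (z, y)) \<partial>(m z)) \<partial>(marg X n \<mu> I))"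
    using D g unfolding is_disintegration_def by blast
  also have "\<dots> = (\<integral>\<^sup>+x. (\<integral>\<^sup>+ y. g (merge J I (xbar n I x, y)) \<partial>(m (xbar n I x))) \<partial>\<mu>)"
    unfolding marg_def
  proof (rule nn_integral_distr[OF xbar_meas])
    have "(\<lambda>(z, y). g (merge J I (z, y))) \<in> borel_measurable (Z \<Otimes>\<^sub>M Y)"
      using measurable_comp[OF merge_meas g] by (simp add: comp_def split_beta')
    then show "(\<lambda>z. \<integral>\<^sup>+ y. g (merge J I (z, y)) \<partial>(m z)) \<in> borel_measurable (distr \<mu> Z (xbar n I))"
      using nn_integral_measurable_subprob_algebra2[OF _ m_meas] by simp
  qed
  finally show ?thesis unfolding glue_def .
qed


lemma glue1_meas: assumes "x \<in> space \<mu>" shows "glue n I x \<in> measurable Y \<mu>"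
  using measurable_Pair2[OF glue_meas assms] by simp

lemma pair_glue_meas:
  assumes "H \<in> borel_measurable (\<mu> \<Otimes>\<^sub>M \<mu>)"
  shows "(\<lambda>w. H (fst w, glue n I (fst w) (snd w))) \<in> borel_measurable (\<mu> \<Otimes>\<^sub>M Y)"
proof -
  have "(\<lambda>w. glue n I (fst w) (snd w)) \<in> measurable (\<mu> \<Otimes>\<^sub>M Y) \<mu>"
    using glue_meas by (simp add: split_beta')
  then have "(\<lambda>w. (fst w, glue n I (fst w) (snd w))) \<in> measurable (\<mu> \<Otimes>\<^sub>M Y) (\<mu> \<Otimes>\<^sub>M \<mu>)"
    by (intro measurable_Pair measurable_fst)
  from measurable_comp[OF this assms] show ?thesis by (simp add: comp_def)
qed

lemma pair_glue_meas':
  assumes "H \<in> borel_measurable (\<mu> \<Otimes>\<^sub>M \<mu>)"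
  shows "(\<lambda>w. H (glue n I (fst w) (snd w), fst w)) \<in> borel_measurable (\<mu> \<Otimes>\<^sub>M Y)"
proof -
  have "(\<lambda>w. glue n I (fst w) (snd w)) \<in> measurable (\<mu> \<Otimes>\<^sub>M Y) \<mu>"
    using glue_meas by (simp add: split_beta')
  then have "(\<lambda>w. (glue n I (fst w) (snd w), fst w)) \<in> measurable (\<mu> \<Otimes>\<^sub>M Y) (\<mu> \<Otimes>\<^sub>M \<mu>)"
    by (intro measurable_Pair measurable_fst)
  from measurable_comp[OF this assms] show ?thesis by (simp add: comp_def)
qed

lemma inner_meas:
  assumes H: "H \<in> borel_measurable (\<mu> \<Otimes>\<^sub>M \<mu>)" and x: "x \<in> space \<mu>"
  shows "(\<lambda>w. H (glue n I x (fst w), glue n I x (snd w))) \<in> borel_measurable (m (xbar n I x) \<Otimes>\<^sub>M m (xbar n I x))"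
proof -
  have s: "sets (m (xbar n I x) \<Otimes>\<^sub>M m (xbar n I x)) = sets (Y \<Otimes>\<^sub>M Y)"
    using sets_m[OF xbar_space[OF x]] by (intro sets_pair_measure_cong)
  have g: "glue n I x \<in> measurable Y \<mu>" by (rule glue1_meas[OF x])
  have "(\<lambda>w. (glue n I x (fst w), glue n I x (snd w))) \<in> measurable (Y \<Otimes>\<^sub>M Y) (\<mu> \<Otimes>\<^sub>M \<mu>)"
    by (intro measurable_Pair measurable_compose[OF measurable_fst g] measurable_compose[OF measurable_snd g])
  from measurable_comp[OF this H] have "(\<lambda>w. H (glue n I x (fst w), glue n I x (snd w))) \<in> borel_measurable (Y \<Otimes>\<^sub>M Y)"
    by (simp add: comp_def)
  then show ?thesis by (subst measurable_cong_sets[OF s refl])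
qed

lemma swap:
  assumes H: "H \<in> borel_measurable (\<mu> \<Otimes>\<^sub>M \<mu>)"
  shows "(\<integral>\<^sup>+x. (\<integral>\<^sup>+y. H (x, glue n I x y) \<partial>m (xbar n I x)) \<partial>\<mu>) =
         (\<integral>\<^sup>+x. (\<integral>\<^sup>+y. H (glue n I x y, x) \<partial>m (xbar n I x)) \<partial>\<mu>)"
proof -
  have m1: "(\<lambda>x. \<integral>\<^sup>+y. H (x, glue n I x y) \<partial>m (xbar n I x)) \<in> borel_measurable \<mu>"
    using kernel_meas[of "\<lambda>x y. H (x, glue n I x y)"] pair_glue_meas[OF H] by (simp add: split_beta')
  have m2: "(\<lambda>x. \<integral>\<^sup>+y. H (glue n I x y, x) \<partial>m (xbar n I x)) \<in> borel_measurable \<mu>"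
    using kernel_meas[of "\<lambda>x y. H (glue n I x y, x)"] pair_glue_meas'[OF H] by (simp add: split_beta')
  have "(\<integral>\<^sup>+x. (\<integral>\<^sup>+y. H (x, glue n I x y) \<partial>m (xbar n I x)) \<partial>\<mu>) =
        (\<integral>\<^sup>+x. (\<integral>\<^sup>+y'. (\<integral>\<^sup>+y. H (glue n I x y', glue n I x y) \<partial>m (xbar n I x)) \<partial>m (xbar n I x)) \<partial>\<mu>)"
    using disint[OF m1] by simp
  also have "\<dots> = (\<integral>\<^sup>+x. (\<integral>\<^sup>+y'. (\<integral>\<^sup>+y. H (glue n I x y, glue n I x y') \<partial>m (xbar n I x)) \<partial>m (xbar n I x)) \<partial>\<mu>)"
  proof (rule nn_integral_cong)
    fix x assume x: "x \<in> space \<mu>"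
    interpret pair_sigma_finite "m (xbar n I x)" "m (xbar n I x)"
      using m_prob[OF xbar_space[OF x]] by (simp add: pair_sigma_finite_def prob_space_imp_sigma_finite)
    show "(\<integral>\<^sup>+y'. (\<integral>\<^sup>+y. H (glue n I x y', glue n I x y) \<partial>m (xbar n I x)) \<partial>m (xbar n I x)) =
          (\<integral>\<^sup>+y'. (\<integral>\<^sup>+y. H (glue n I x y, glue n I x y') \<partial>m (xbar n I x)) \<partial>m (xbar n I x))"
      using Fubini'[of "\<lambda>y' y. H (glue n I x y', glue n I x y)"] inner_meas[OF H x]
      by (simp add: split_beta')
  qed
  also have "\<dots> = (\<integral>\<^sup>+x. (\<integral>\<^sup>+y. H (glue n I x y, x) \<partial>m (xbar n I x)) \<partial>\<mu>)"
    using disint[OF m2] by simp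
  finally show ?thesis .
qed

lemma AE_transfer:
  assumes "AE x in \<mu>. P x"
  shows "AE x in \<mu>. AE y in m (xbar n I x). P (glue n I x y)"
proof -
  obtain N where N: "N \<in> sets \<mu>" "emeasure \<mu> N = 0" "{x \<in> space \<mu>. \<not> P x} \<subseteq> N"
    using assms unfolding eventually_ae_filter by blast
  have iN: "indicator N \<in> borel_measurable \<mu>" using N(1) by simp
  have mN: "(\<lambda>w. (indicator N (snd w) :: ennreal)) \<in> borel_measurable (\<mu> \<Otimes>\<^sub>M \<mu>)"
    using measurable_compose[OF measurable_snd iN] .
  have mi: "(\<lambda>x. \<integral>\<^sup>+y. indicator N (glue n I x y) \<partial>m (xbar n I x)) \<in> borel_measurable \<mu>"
    using kernel_meas[of "\<lambda>x y. indicator N (glue n I x y)"] pair_glue_meas[OF mN] by (simp add: split_beta')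
  have "(\<integral>\<^sup>+x. (\<integral>\<^sup>+y. indicator N (glue n I x y) \<partial>m (xbar n I x)) \<partial>\<mu>) = (\<integral>\<^sup>+x. indicator N x \<partial>\<mu>)"
    using disint[OF iN] by simp
  also have "\<dots> = 0" using N by simp
  finally have A1: "AE x in \<mu>. (\<integral>\<^sup>+y. indicator N (glue n I x y) \<partial>m (xbar n I x)) = 0"
    using nn_integral_0_iff_AE[OF mi] by simp
  moreover have "AE x in \<mu>. (\<integral>\<^sup>+y. indicator N (glue n I x y) \<partial>m (xbar n I x)) = 0 \<longrightarrow>
      (AE y in m (xbar n I x). P (glue n I x y))"
  proof (rule AE_I2, rule impI)
    fix x assume x: "x \<in> space \<mu>" and z: "(\<integral>\<^sup>+y. indicator N (glue n I x y) \<partial>m (xbar n I x)) = 0"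
    have mg: "(\<lambda>y. indicator N (glue n I x y) :: ennreal) \<in> borel_measurable (m (xbar n I x))"
      using measurable_comp[OF glue1_meas[OF x] iN]
      by (subst measurable_cong_sets[OF sets_m[OF xbar_space[OF x]] refl]) (simp add: comp_def)
    have B1: "AE y in m (xbar n I x). indicator N (glue n I x y) = (0::ennreal)"
      using z nn_integral_0_iff_AE[OF mg] by simp
    moreover have "AE y in m (xbar n I x). indicator N (glue n I x y) = (0::ennreal) \<longrightarrow> P (glue n I x y)"
    proof (rule AE_I2, rule impI)
      fix y assume y: "y \<in> space (m (xbar n I x))" and "indicator N (glue n I x y) = (0::ennreal)"
      then have "glue n I x y \<notin> N" by (simp add: indicator_def split: if_splits)
      moreover have "glue n I x y \<in> space \<mu>"
        using glue_space[OF x] y space_m[OF xbar_space[OF x]] by simp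
      ultimately show "P (glue n I x y)" using N(3) by blast
    qed
    ultimately show "AE y in m (xbar n I x). P (glue n I x y)" by (rule AE_mp)
  qed
  ultimately show ?thesis by (rule AE_mp)
qed

end

lemma powr_tangent:
  fixes s t r :: real
  assumes "0 \<le> t" "t \<le> s" "1 \<le> r"
  shows "s powr r - t powr r \<le> r * s powr (r - 1) * (s - t)"
proof (cases "t = s")
  case True then show ?thesis by simp
next
  case False
  then have ts: "t < s" using assms by simp
  show ?thesis
  proof (cases "t = 0")
    case True
    have "s powr r = s powr (r - 1) * s" using ts True
      by (simp add: powr_diff)
    moreover have "s powr (r - 1) * s \<le> r * s powr (r - 1) * s"
      using assms ts True by (intro mult_right_mono) (auto intro: mult_right_mono)
    ultimately show ?thesis using True ts by simp
  next
    case False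
    then have t0: "0 < t" using assms by simp
    have "\<exists>z. t < z \<and> z < s \<and> s powr r - t powr r = (s - t) * (r * z powr (r - 1))"
      by (rule MVT2[OF ts]) (rule has_real_derivative_powr, use t0 in simp)
    then obtain z where z: "t < z" "z < s" "s powr r - t powr r = (s - t) * (r * z powr (r - 1))"
      by blast
    have "z powr (r - 1) \<le> s powr (r - 1)"
      using z t0 assms by (intro powr_mono2) auto
    then have "r * z powr (r - 1) \<le> r * s powr (r - 1)" using assms by simp
    then show ?thesis using z ts by (simp add: mult.commute mult_left_mono)
  qed
qed

lemma pw_ineq:
  fixes a b q :: real
  assumes q: "2 \<le> q"
  shows "(\<bar>a\<bar> powr (q/2) - \<bar>b\<bar> powr (q/2))\<^sup>2 \<le>
         q\<^sup>2 / 4 * ((a - b)\<^sup>2 * \<bar>a\<bar> powr (q - 2) + (a - b)\<^sup>2 * \<bar>b\<bar> powr (q - 2))"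
proof -
  have key: "(s powr (q/2) - t powr (q/2))\<^sup>2 \<le> q\<^sup>2 / 4 * ((s - t)\<^sup>2 * s powr (q - 2))"
    if "0 \<le> t" "t \<le> s" for s t :: real
  proof -
    have r: "1 \<le> q/2" using q by simp
    have h1: "0 \<le> s powr (q/2) - t powr (q/2)" using that q by (simp add: powr_mono2)
    have h2: "s powr (q/2) - t powr (q/2) \<le> q/2 * s powr (q/2 - 1) * (s - t)"
      using powr_tangent[OF that r] .
    have "(s powr (q/2) - t powr (q/2))\<^sup>2 \<le> (q/2 * s powr (q/2 - 1) * (s - t))\<^sup>2"
      using h1 h2 by (simp add: power_mono)
    also have "\<dots> = q\<^sup>2 / 4 * ((s - t)\<^sup>2 * (s powr (q/2 - 1))\<^sup>2)"
      by (simp add: power_mult_distrib power_divide)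
    also have "(s powr (q/2 - 1))\<^sup>2 = s powr (q - 2)"
      using that by (simp add: powr_powr[symmetric] power2_eq_square powr_add[symmetric])
    finally show ?thesis .
  qed
  have ab: "(\<bar>a\<bar> - \<bar>b\<bar>)\<^sup>2 \<le> (a - b)\<^sup>2"
    by (metis abs_triangle_ineq3 abs_ge_zero power_mono power2_abs)
  have nn: "0 \<le> q\<^sup>2 / 4 * ((a - b)\<^sup>2 * \<bar>c\<bar> powr (q - 2))" for c by simp
  show ?thesis
  proof (cases "\<bar>b\<bar> \<le> \<bar>a\<bar>")
    case True
    have "(\<bar>a\<bar> powr (q/2) - \<bar>b\<bar> powr (q/2))\<^sup>2 \<le> q\<^sup>2 / 4 * ((\<bar>a\<bar> - \<bar>b\<bar>)\<^sup>2 * \<bar>a\<bar> powr (q - 2))"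
      using key[OF _ True] by simp
    also have "\<dots> \<le> q\<^sup>2 / 4 * ((a - b)\<^sup>2 * \<bar>a\<bar> powr (q - 2))"
      using ab by (intro mult_left_mono mult_right_mono) auto
    finally show ?thesis using nn[of b] unfolding distrib_left by linarith
  next
    case False
    have "(\<bar>a\<bar> powr (q/2) - \<bar>b\<bar> powr (q/2))\<^sup>2 = (\<bar>b\<bar> powr (q/2) - \<bar>a\<bar> powr (q/2))\<^sup>2"
      by (simp add: power2_commute)
    also have "\<dots> \<le> q\<^sup>2 / 4 * ((\<bar>b\<bar> - \<bar>a\<bar>)\<^sup>2 * \<bar>b\<bar> powr (q - 2))"
      using key False by simp
    also have "\<dots> \<le> q\<^sup>2 / 4 * ((a - b)\<^sup>2 * \<bar>b\<bar> powr (q - 2))"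
      using ab by (intro mult_left_mono mult_right_mono) (auto simp: power2_commute)
    finally show ?thesis using nn[of a] unfolding distrib_left by linarith
  qed
qed


lemma tln2_bnd:
  fixes t :: real assumes "0 < t" "t \<le> 1"
  shows "t * (ln t)\<^sup>2 \<le> 4"
proof -
  have "ln (1 / sqrt t) \<le> 1 / sqrt t - 1" using assms by (intro ln_le_minus_one) simp
  moreover have "ln (1 / sqrt t) = - ln t / 2" using assms by (simp add: ln_div ln_sqrt)
  ultimately have a: "- ln t \<le> 2 / sqrt t" by simp
  have b: "0 \<le> - ln t" using assms by simp
  have "(- ln t)\<^sup>2 \<le> (2 / sqrt t)\<^sup>2" using a b by (intro power_mono) auto
  then have "(ln t)\<^sup>2 \<le> 4 / t" using assms by (simp add: power_divide)
  then show ?thesis using assms by (simp add: field_simps)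
qed

lemma tln_bnd:
  fixes t :: real assumes "0 < t" "t \<le> 1"
  shows "t * \<bar>ln t\<bar> \<le> 1"
proof -
  have "ln (1 / t) \<le> 1 / t - 1" using assms by (intro ln_le_minus_one) simp
  then have "- ln t \<le> 1 / t" using assms by (simp add: ln_div)
  moreover have "\<bar>ln t\<bar> = - ln t" using assms by simp
  ultimately show ?thesis using assms by (simp add: field_simps)
qed

lemma pw_second:
  fixes t C e E :: real
  assumes "0 \<le> t" "t \<le> C" "1 \<le> C" "1 \<le> e" "e \<le> E"
  shows "t powr e * (ln t)\<^sup>2 \<le> 4 + C powr E * C\<^sup>2"
proof (cases "t \<le> 1")
  case True
  show ?thesis
  proof (cases "t = 0")
    case False
    then have t0: "0 < t" using assms by simp
    have "t powr e \<le> t powr 1" using True t0 assms by (intro powr_mono') auto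
    then have "t powr e * (ln t)\<^sup>2 \<le> t * (ln t)\<^sup>2" using t0 by (intro mult_right_mono) auto
    also have "\<dots> \<le> 4" by (rule tln2_bnd[OF t0 True])
    finally show ?thesis using assms by (smt (verit) mult_nonneg_nonneg powr_ge_zero zero_le_power2)
  qed (use assms in \<open>simp add: add_nonneg_nonneg\<close>)
next
  case False
  then have t1: "1 < t" by simp
  have "t powr e \<le> C powr E" using assms t1
    by (meson less_imp_le order_trans powr_mono powr_mono2 less_le_trans zero_less_one)
  moreover have "(ln t)\<^sup>2 \<le> C\<^sup>2"
  proof -
    have "ln t \<le> t" using t1 by (meson less_imp_le ln_le_minus_one add_le_cancel_left diff_le_eq order_trans le_add_same_cancel1 zero_le_one less_trans zero_less_one ln_less_self)
    then have "ln t \<le> C" using assms by simp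
    moreover have "0 \<le> ln t" using t1 by simp
    ultimately show ?thesis by (intro power_mono) auto
  qed
  ultimately have "t powr e * (ln t)\<^sup>2 \<le> C powr E * C\<^sup>2"
    by (intro mult_mono) auto
  then show ?thesis by simp
qed

lemma pw_first:
  fixes t C e E :: real
  assumes "0 \<le> t" "t \<le> C" "1 \<le> C" "1 \<le> e" "e \<le> E"
  shows "\<bar>t powr e * ln t\<bar> \<le> 1 + C powr E * C"
proof (cases "t \<le> 1")
  case True
  show ?thesis
  proof (cases "t = 0")
    case False
    then have t0: "0 < t" using assms by simp
    have "t powr e \<le> t powr 1" using True t0 assms by (intro powr_mono') auto
    then have "\<bar>t powr e * ln t\<bar> \<le> t * \<bar>ln t\<bar>" using t0 by (simp add: abs_mult mult_right_mono)
    also have "\<dots> \<le> 1" by (rule tln_bnd[OF t0 True])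
    finally show ?thesis using assms by (smt (verit) mult_nonneg_nonneg powr_ge_zero)
  qed (use assms in simp)
next
  case False
  then have t1: "1 < t" by simp
  have "t powr e \<le> C powr E" using assms t1
    by (meson less_imp_le order_trans powr_mono powr_mono2 less_le_trans zero_less_one)
  moreover have "\<bar>ln t\<bar> \<le> C"
  proof -
    have "ln t \<le> t" using t1 by (simp add: ln_less_self less_imp_le)
    then show ?thesis using assms t1 by simp
  qed
  ultimately have "\<bar>t powr e * ln t\<bar> \<le> C powr E * C"
    by (simp add: abs_mult) (intro mult_mono, auto)
  then show ?thesis by simp
qed

lemma mvt_sym:
  fixes f f' :: "real \<Rightarrow> real"
  assumes der: "\<And>s. (f has_real_derivative f' s) (at s)"
  shows "\<exists>\<xi>. \<bar>\<xi>\<bar> \<le> \<bar>d\<bar> \<and> f d - f 0 = d * f' \<xi>"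
proof (cases "d = 0")
  case True then show ?thesis by (intro exI[of _ 0]) simp
next
  case False
  show ?thesis
  proof (cases "0 < d")
    case True
    obtain z where "0 < z" "z < d" "f d - f 0 = (d - 0) * f' z"
      using MVT2[OF True der] by blast
    then show ?thesis by (intro exI[of _ z]) auto
  next
    case False
    then have "d < 0" using \<open>d \<noteq> 0\<close> by simp
    then obtain z where "d < z" "z < 0" "f 0 - f d = (0 - d) * f' z"
      using MVT2[OF \<open>d < 0\<close> der] by blast
    then show ?thesis by (intro exI[of _ z]) (auto simp: algebra_simps)
  qed
qed

lemma taylor_pt:
  fixes t C q0 d :: real
  assumes t: "0 \<le> t" "t \<le> C" and C: "1 \<le> C" and q0: "2 \<le> q0" and d: "\<bar>d\<bar> \<le> 1/2"
  shows "\<bar>t powr (q0 + d) - t powr q0 - d * (t powr q0 * ln t)\<bar> \<le> (4 + C powr (q0 + 1) * C\<^sup>2) * d\<^sup>2"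
proof (cases "t = 0")
  case True then show ?thesis by simp
next
  case False
  then have t0: "0 < t" using t by simp
  define L where "L = ln t"
  define h where "h s = exp ((q0 + s) * L) - exp (q0 * L) - s * (exp (q0 * L) * L)" for s
  define h1 where "h1 s = exp ((q0 + s) * L) * L - exp (q0 * L) * L" for s
  define h2 where "h2 s = exp ((q0 + s) * L) * L\<^sup>2" for s
  have dh: "(h has_real_derivative h1 s) (at s)" for s
    unfolding h_def h1_def by (auto intro!: derivative_eq_intros simp: algebra_simps)
  have dh1: "(h1 has_real_derivative h2 s) (at s)" for s
    unfolding h1_def h2_def by (auto intro!: derivative_eq_intros simp: power2_eq_square algebra_simps)
  obtain \<xi>1 where x1: "\<bar>\<xi>1\<bar> \<le> \<bar>d\<bar>" "h d - h 0 = d * h1 \<xi>1" using mvt_sym[OF dh] by blast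
  obtain \<xi>2 where x2: "\<bar>\<xi>2\<bar> \<le> \<bar>\<xi>1\<bar>" "h1 \<xi>1 - h1 0 = \<xi>1 * h2 \<xi>2" using mvt_sym[OF dh1] by blast
  have h0: "h 0 = 0" "h1 0 = 0" unfolding h_def h1_def by simp_all
  have "h2 \<xi>2 = t powr (q0 + \<xi>2) * (ln t)\<^sup>2" unfolding h2_def L_def using t0 by (simp add: powr_def)
  also have "\<dots> \<le> 4 + C powr (q0 + 1) * C\<^sup>2"
    using x1 x2 d q0 by (intro pw_second[OF t C]) auto
  finally have b2: "h2 \<xi>2 \<le> 4 + C powr (q0 + 1) * C\<^sup>2" .
  have h2nn: "0 \<le> h2 \<xi>2" unfolding h2_def by simp
  have "\<bar>h d\<bar> = \<bar>d\<bar> * \<bar>\<xi>1\<bar> * h2 \<xi>2" using x1 x2 h0 h2nn by (simp add: abs_mult)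
  also have "\<dots> \<le> \<bar>d\<bar> * \<bar>d\<bar> * (4 + C powr (q0 + 1) * C\<^sup>2)"
    using x1 b2 h2nn by (intro mult_mono) (auto intro: mult_left_mono)
  finally have "\<bar>h d\<bar> \<le> (4 + C powr (q0 + 1) * C\<^sup>2) * d\<^sup>2" by (simp add: power2_eq_square abs_mult[symmetric] mult.commute)
  moreover have "h d = t powr (q0 + d) - t powr q0 - d * (t powr q0 * ln t)"
    unfolding h_def L_def using t0 by (simp add: powr_def)
  ultimately show ?thesis by simp
qed


lemma integrable_bnd:
  fixes f :: "'b \<Rightarrow> real"
  assumes "prob_space M" "f \<in> borel_measurable M" "\<And>x. x \<in> space M \<Longrightarrow> \<bar>f x\<bar> \<le> B"
  shows "integrable M f"
proof -
  interpret prob_space M by fact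
  show ?thesis using assms(2,3) by (intro integrable_const_bound[where B=B]) auto
qed

lemma integral_bnd:
  fixes f :: "'b \<Rightarrow> real"
  assumes "prob_space M" "f \<in> borel_measurable M" "\<And>x. x \<in> space M \<Longrightarrow> \<bar>f x\<bar> \<le> B"
  shows "\<bar>integral\<^sup>L M f\<bar> \<le> B"
proof -
  interpret prob_space M by fact
  have i: "integrable M f" by (rule integrable_bnd[OF assms])
  have "integral\<^sup>L M f \<le> B" using assms(3) by (intro integral_le_const[OF i]) (auto simp: abs_le_iff)
  moreover have "integral\<^sup>L M (\<lambda>x. - f x) \<le> B" using assms(3) i
    by (intro integral_le_const) (auto simp: abs_le_iff)
  ultimately show ?thesis by simp
qed

context dsetup begin

lemma kslice:
  assumes F: "(\<lambda>w. F (fst w) (snd w)) \<in> borel_measurable (\<mu> \<Otimes>\<^sub>M Y)" and x: "x \<in> space \<mu>"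
  shows "F x \<in> borel_measurable (m (xbar n I x))"
proof -
  have "(\<lambda>y. F x y) \<in> borel_measurable Y" using measurable_Pair2[OF F x] by simp
  then show ?thesis by (subst measurable_cong_sets[OF sets_m[OF xbar_space[OF x]] refl]) simp
qed

lemma kI_meas:
  fixes F :: "(nat \<Rightarrow> 'a) \<Rightarrow> (nat \<Rightarrow> 'a) \<Rightarrow> real"
  assumes F: "(\<lambda>w. F (fst w) (snd w)) \<in> borel_measurable (\<mu> \<Otimes>\<^sub>M Y)" and nn: "\<And>x y. 0 \<le> F x y"
  shows "(\<lambda>x. \<integral>y. F x y \<partial>m (xbar n I x)) \<in> borel_measurable \<mu>"
proof -
  have eq: "(\<integral>y. F x y \<partial>m (xbar n I x)) = enn2real (\<integral>\<^sup>+y. ennreal (F x y) \<partial>m (xbar n I x))"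
    if x: "x \<in> space \<mu>" for x
    using integral_eq_nn_integral[OF kslice[OF F x]] nn by simp
  have "(\<lambda>w. ennreal (F (fst w) (snd w))) \<in> borel_measurable (\<mu> \<Otimes>\<^sub>M Y)"
    using measurable_compose[OF F measurable_ennreal] .
  then have "(\<lambda>x. \<integral>\<^sup>+y. ennreal (F x y) \<partial>m (xbar n I x)) \<in> borel_measurable \<mu>"
    using kernel_meas[of "\<lambda>x y. ennreal (F x y)"] by (simp add: split_beta')
  then have "(\<lambda>x. enn2real (\<integral>\<^sup>+y. ennreal (F x y) \<partial>m (xbar n I x))) \<in> borel_measurable \<mu>"
    by (rule borel_measurable_enn2real)
  then show ?thesis using eq by (subst measurable_cong) auto
qed

lemma kI_int:
  fixes F :: "(nat \<Rightarrow> 'a) \<Rightarrow> (nat \<Rightarrow> 'a) \<Rightarrow> real"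
  assumes F: "(\<lambda>w. F (fst w) (snd w)) \<in> borel_measurable (\<mu> \<Otimes>\<^sub>M Y)" and x: "x \<in> space \<mu>"
    and bd: "\<And>x y. \<bar>F x y\<bar> \<le> B"
  shows "integrable (m (xbar n I x)) (F x)"
  using integrable_bnd[OF m_prob[OF xbar_space[OF x]] kslice[OF F x]] bd by blast

lemma kI_bnd:
  fixes F :: "(nat \<Rightarrow> 'a) \<Rightarrow> (nat \<Rightarrow> 'a) \<Rightarrow> real"
  assumes F: "(\<lambda>w. F (fst w) (snd w)) \<in> borel_measurable (\<mu> \<Otimes>\<^sub>M Y)" and x: "x \<in> space \<mu>"
    and bd: "\<And>x y. \<bar>F x y\<bar> \<le> B"
  shows "\<bar>\<integral>y. F x y \<partial>m (xbar n I x)\<bar> \<le> B"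
  using integral_bnd[OF m_prob[OF xbar_space[OF x]] kslice[OF F x]] bd by blast

lemma kI_outer_int:
  fixes F :: "(nat \<Rightarrow> 'a) \<Rightarrow> (nat \<Rightarrow> 'a) \<Rightarrow> real"
  assumes F: "(\<lambda>w. F (fst w) (snd w)) \<in> borel_measurable (\<mu> \<Otimes>\<^sub>M Y)" and nn: "\<And>x y. 0 \<le> F x y"
    and bd: "\<And>x y. \<bar>F x y\<bar> \<le> B"
  shows "integrable \<mu> (\<lambda>x. \<integral>y. F x y \<partial>m (xbar n I x))"
  by (rule integrable_bnd[OF P kI_meas[OF F nn]]) (rule kI_bnd[OF F _ bd])

lemma kI_enn:
  fixes F :: "(nat \<Rightarrow> 'a) \<Rightarrow> (nat \<Rightarrow> 'a) \<Rightarrow> real"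
  assumes F: "(\<lambda>w. F (fst w) (snd w)) \<in> borel_measurable (\<mu> \<Otimes>\<^sub>M Y)" and nn: "\<And>x y. 0 \<le> F x y"
    and bd: "\<And>x y. \<bar>F x y\<bar> \<le> B"
  shows "ennreal (\<integral>x. (\<integral>y. F x y \<partial>m (xbar n I x)) \<partial>\<mu>) =
         (\<integral>\<^sup>+x. (\<integral>\<^sup>+y. ennreal (F x y) \<partial>m (xbar n I x)) \<partial>\<mu>)"
proof -
  have "ennreal (\<integral>x. (\<integral>y. F x y \<partial>m (xbar n I x)) \<partial>\<mu>) = (\<integral>\<^sup>+x. ennreal (\<integral>y. F x y \<partial>m (xbar n I x)) \<partial>\<mu>)"
    by (rule nn_integral_eq_integral[symmetric, OF kI_outer_int[OF F nn bd]])
       (simp add: integral_nonneg_AE nn)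
  also have "\<dots> = (\<integral>\<^sup>+x. (\<integral>\<^sup>+y. ennreal (F x y) \<partial>m (xbar n I x)) \<partial>\<mu>)"
  proof (rule nn_integral_cong)
    fix x assume x: "x \<in> space \<mu>"
    show "ennreal (\<integral>y. F x y \<partial>m (xbar n I x)) = (\<integral>\<^sup>+y. ennreal (F x y) \<partial>m (xbar n I x))"
      by (rule nn_integral_eq_integral[symmetric, OF kI_int[OF F x bd]]) (simp add: nn)
  qed
  finally show ?thesis .
qed

lemma swapL:
  fixes H :: "(nat \<Rightarrow> 'a) \<times> (nat \<Rightarrow> 'a) \<Rightarrow> real"
  assumes H: "H \<in> borel_measurable (\<mu> \<Otimes>\<^sub>M \<mu>)" and nn: "\<And>u. 0 \<le> H u" and bd: "\<And>u. H u \<le> B"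
  shows "(\<integral>x. (\<integral>y. H (x, glue n I x y) \<partial>m (xbar n I x)) \<partial>\<mu>) =
         (\<integral>x. (\<integral>y. H (glue n I x y, x) \<partial>m (xbar n I x)) \<partial>\<mu>)"
proof -
  have bd': "\<bar>H u\<bar> \<le> B" for u using nn[of u] bd[of u] by simp
  have F1: "(\<lambda>w. H (fst w, glue n I (fst w) (snd w))) \<in> borel_measurable (\<mu> \<Otimes>\<^sub>M Y)"
    by (rule pair_glue_meas[OF H])
  have F2: "(\<lambda>w. H (glue n I (fst w) (snd w), fst w)) \<in> borel_measurable (\<mu> \<Otimes>\<^sub>M Y)"
    by (rule pair_glue_meas'[OF H])
  have EH: "(\<lambda>u. ennreal (H u)) \<in> borel_measurable (\<mu> \<Otimes>\<^sub>M \<mu>)"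
    using measurable_compose[OF H measurable_ennreal] .
  have "ennreal (\<integral>x. (\<integral>y. H (x, glue n I x y) \<partial>m (xbar n I x)) \<partial>\<mu>) =
        (\<integral>\<^sup>+x. (\<integral>\<^sup>+y. ennreal (H (x, glue n I x y)) \<partial>m (xbar n I x)) \<partial>\<mu>)"
    using kI_enn[of "\<lambda>x y. H (x, glue n I x y)", OF F1 nn bd'] .
  also have "\<dots> = (\<integral>\<^sup>+x. (\<integral>\<^sup>+y. ennreal (H (glue n I x y, x)) \<partial>m (xbar n I x)) \<partial>\<mu>)"
    using swap[OF EH] .
  also have "\<dots> = ennreal (\<integral>x. (\<integral>y. H (glue n I x y, x) \<partial>m (xbar n I x)) \<partial>\<mu>)"
    using kI_enn[of "\<lambda>x y. H (glue n I x y, x)", OF F2 nn bd'] by simp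
  finally show ?thesis
    using nn by (subst (asm) ennreal_inj) (auto intro!: integral_nonneg_AE)
qed

end

context dsetup begin

lemma H2_meas:
  fixes u :: "(nat \<Rightarrow> 'a) \<Rightarrow> real"
  assumes u: "u \<in> borel_measurable \<mu>"
  shows "(\<lambda>w. u (fst w)) \<in> borel_measurable (\<mu> \<Otimes>\<^sub>M \<mu>)" "(\<lambda>w. u (snd w)) \<in> borel_measurable (\<mu> \<Otimes>\<^sub>M \<mu>)"
  using measurable_compose[OF measurable_fst u] measurable_compose[OF measurable_snd u] by auto

lemma partial_sq: "(partialI n I m u x)\<^sup>2 = 1/2 * (\<integral>y. (u x - u (glue n I x y))\<^sup>2 \<partial>m (xbar n I x))"
  unfolding partialI_def by (simp add: integral_nonneg_AE)

lemma partial_nonneg: "0 \<le> partialI n I m u x"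
  unfolding partialI_def by simp

lemma D2_meas:
  fixes u :: "(nat \<Rightarrow> 'a) \<Rightarrow> real"
  assumes u: "u \<in> borel_measurable \<mu>"
  shows "(\<lambda>w. (u (fst w) - u (glue n I (fst w) (snd w)))\<^sup>2) \<in> borel_measurable (\<mu> \<Otimes>\<^sub>M Y)"
proof -
  note [measurable] = H2_meas[OF u]
  have "(\<lambda>w. (u (fst w) - u (snd w))\<^sup>2) \<in> borel_measurable (\<mu> \<Otimes>\<^sub>M \<mu>)" by measurable
  from pair_glue_meas[OF this] show ?thesis by simp
qed

lemma partial_meas:
  fixes u :: "(nat \<Rightarrow> 'a) \<Rightarrow> real"
  assumes u: "u \<in> borel_measurable \<mu>"
  shows "partialI n I m u \<in> borel_measurable \<mu>"
proof -
  have "(\<lambda>x. \<integral>y. (u x - u (glue n I x y))\<^sup>2 \<partial>m (xbar n I x)) \<in> borel_measurable \<mu>"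
    using kI_meas[of "\<lambda>x y. (u x - u (glue n I x y))\<^sup>2"] D2_meas[OF u] by simp
  note [measurable] = this
  show ?thesis unfolding partialI_def[abs_def] by measurable
qed

lemma partial_sq_bnd:
  fixes u :: "(nat \<Rightarrow> 'a) \<Rightarrow> real"
  assumes u: "u \<in> borel_measurable \<mu>" and bd: "\<And>x. \<bar>u x\<bar> \<le> B" and x: "x \<in> space \<mu>"
  shows "(partialI n I m u x)\<^sup>2 \<le> 2 * B\<^sup>2"
proof -
  have b: "\<bar>(u x - u y)\<^sup>2\<bar> \<le> 4 * B\<^sup>2" for x y
  proof -
    have "\<bar>u x - u y\<bar> \<le> 2 * B" using bd[of x] bd[of y] by simp
    then have "\<bar>u x - u y\<bar>\<^sup>2 \<le> (2 * B)\<^sup>2" by (intro power_mono) auto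
    then show ?thesis by (simp add: power_mult_distrib)
  qed
  have "\<bar>\<integral>y. (u x - u (glue n I x y))\<^sup>2 \<partial>m (xbar n I x)\<bar> \<le> 4 * B\<^sup>2"
    using kI_bnd[of "\<lambda>x y. (u x - u (glue n I x y))\<^sup>2", OF _ x] D2_meas[OF u] b by simp
  then show ?thesis unfolding partial_sq by simp
qed

end

context dsetup begin

lemma K1:
  fixes g :: "(nat \<Rightarrow> 'a) \<Rightarrow> real"
  assumes g: "g \<in> borel_measurable \<mu>" and bd: "\<And>x. \<bar>g x\<bar> \<le> C" and q: "2 \<le> q"
  shows "(\<integral>x. (partialI n I m (\<lambda>x. \<bar>g x\<bar> powr (q/2)) x)\<^sup>2 \<partial>\<mu>)
         \<le> q\<^sup>2 / 2 * (\<integral>x. \<bar>g x\<bar> powr (q - 2) * (partialI n I m g x)\<^sup>2 \<partial>\<mu>)"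
proof -
  define w where "w = (\<lambda>x. \<bar>g x\<bar> powr (q/2))"
  define A :: "(nat \<Rightarrow> 'a) \<times> (nat \<Rightarrow> 'a) \<Rightarrow> real"
    where "A u = (g (fst u) - g (snd u))\<^sup>2 * \<bar>g (fst u)\<bar> powr (q - 2)" for u
  define Ar :: "(nat \<Rightarrow> 'a) \<times> (nat \<Rightarrow> 'a) \<Rightarrow> real"
    where "Ar u = (g (fst u) - g (snd u))\<^sup>2 * \<bar>g (snd u)\<bar> powr (q - 2)" for u
  define W :: "(nat \<Rightarrow> 'a) \<times> (nat \<Rightarrow> 'a) \<Rightarrow> real"
    where "W u = (w (fst u) - w (snd u))\<^sup>2" for u
  have C0: "0 \<le> C" using bd[of undefined] by simp
  note [measurable] = H2_meas[OF g] g
  have Am: "A \<in> borel_measurable (\<mu> \<Otimes>\<^sub>M \<mu>)" unfolding A_def[abs_def] by measurable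
  have Arm: "Ar \<in> borel_measurable (\<mu> \<Otimes>\<^sub>M \<mu>)" unfolding Ar_def[abs_def] by measurable
  have wm: "w \<in> borel_measurable \<mu>" unfolding w_def by measurable
  have Wm: "W \<in> borel_measurable (\<mu> \<Otimes>\<^sub>M \<mu>)" unfolding W_def[abs_def]
    using H2_meas[OF wm] by measurable
  define K where "K = 4 * C\<^sup>2 * C powr (q - 2)"
  have dif: "(g a - g b)\<^sup>2 \<le> 4 * C\<^sup>2" for a b
  proof -
    have "\<bar>g a - g b\<bar> \<le> 2 * C" using bd[of a] bd[of b] by simp
    then have "\<bar>g a - g b\<bar>\<^sup>2 \<le> (2 * C)\<^sup>2" by (intro power_mono) auto
    then show ?thesis by (simp add: power_mult_distrib)
  qed
  have pw: "\<bar>g a\<bar> powr (q - 2) \<le> C powr (q - 2)" for a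
    using bd[of a] q by (intro powr_mono2) auto
  have A0: "0 \<le> A u" "A u \<le> K" for u
    unfolding A_def K_def using dif pw by (auto intro!: mult_mono)
  have Ar0: "0 \<le> Ar u" "Ar u \<le> K" for u
    unfolding Ar_def K_def using dif pw by (auto intro!: mult_mono)
  have Ab: "\<bar>A u\<bar> \<le> K" "\<bar>Ar u\<bar> \<le> K" for u using A0[of u] Ar0[of u] by auto
  have wb: "\<bar>w a\<bar> \<le> C powr (q/2)" for a
    unfolding w_def using bd[of a] q by (auto intro!: powr_mono2)
  have Wb: "\<bar>W u\<bar> \<le> 4 * (C powr (q/2))\<^sup>2" for u
  proof -
    have "\<bar>w (fst u) - w (snd u)\<bar> \<le> 2 * C powr (q/2)" using wb[of "fst u"] wb[of "snd u"] by simp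
    then have "\<bar>w (fst u) - w (snd u)\<bar>\<^sup>2 \<le> (2 * C powr (q/2))\<^sup>2" by (intro power_mono) auto
    then show ?thesis unfolding W_def by (simp add: power_mult_distrib)
  qed
  have FA: "(\<lambda>z. A (fst z, glue n I (fst z) (snd z))) \<in> borel_measurable (\<mu> \<Otimes>\<^sub>M Y)"
    by (rule pair_glue_meas[OF Am])
  have FAr: "(\<lambda>z. Ar (fst z, glue n I (fst z) (snd z))) \<in> borel_measurable (\<mu> \<Otimes>\<^sub>M Y)"
    by (rule pair_glue_meas[OF Arm])
  have FW: "(\<lambda>z. W (fst z, glue n I (fst z) (snd z))) \<in> borel_measurable (\<mu> \<Otimes>\<^sub>M Y)"
    by (rule pair_glue_meas[OF Wm])
  let ?IA = "\<lambda>x. \<integral>y. A (x, glue n I x y) \<partial>m (xbar n I x)"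
  let ?IAr = "\<lambda>x. \<integral>y. Ar (x, glue n I x y) \<partial>m (xbar n I x)"
  let ?IW = "\<lambda>x. \<integral>y. W (x, glue n I x y) \<partial>m (xbar n I x)"
  have iA: "integrable \<mu> ?IA"
    using kI_outer_int[of "\<lambda>x y. A (x, glue n I x y)" K, OF FA] A0 Ab by auto
  have iAr: "integrable \<mu> ?IAr"
    using kI_outer_int[of "\<lambda>x y. Ar (x, glue n I x y)" K, OF FAr] Ar0 Ab by auto
  have iW: "integrable \<mu> ?IW"
    using kI_outer_int[of "\<lambda>x y. W (x, glue n I x y)" "4 * (C powr (q/2))\<^sup>2", OF FW] Wb
    unfolding W_def by auto
  have pt: "W (a, b) \<le> q\<^sup>2 / 4 * (A (a, b) + Ar (a, b))" for a b
    unfolding W_def A_def Ar_def w_def fst_conv snd_conv by (rule pw_ineq[OF q])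
  have step1: "?IW x \<le> q\<^sup>2 / 4 * (?IA x + ?IAr x)" if x: "x \<in> space \<mu>" for x
  proof -
    have i1: "integrable (m (xbar n I x)) (\<lambda>y. A (x, glue n I x y))"
      using kI_int[of "\<lambda>x y. A (x, glue n I x y)" x K, OF FA x] Ab by auto
    have i2: "integrable (m (xbar n I x)) (\<lambda>y. Ar (x, glue n I x y))"
      using kI_int[of "\<lambda>x y. Ar (x, glue n I x y)" x K, OF FAr x] Ab by auto
    have i3: "integrable (m (xbar n I x)) (\<lambda>y. W (x, glue n I x y))"
      using kI_int[of "\<lambda>x y. W (x, glue n I x y)" x "4 * (C powr (q/2))\<^sup>2", OF FW x] Wb by auto
    have "?IW x \<le> (\<integral>y. q\<^sup>2 / 4 * (A (x, glue n I x y) + Ar (x, glue n I x y)) \<partial>m (xbar n I x))"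
      by (rule integral_mono[OF i3]) (use i1 i2 pt in auto)
    also have "\<dots> = q\<^sup>2 / 4 * (?IA x + ?IAr x)"
      using i1 i2 by simp
    finally show ?thesis .
  qed
  have "(\<integral>x. (partialI n I m w x)\<^sup>2 \<partial>\<mu>) = (\<integral>x. 1/2 * ?IW x \<partial>\<mu>)"
    unfolding partial_sq W_def by simp
  also have "\<dots> \<le> (\<integral>x. q\<^sup>2 / 8 * (?IA x + ?IAr x) \<partial>\<mu>)"
  proof (rule integral_mono)
    show "integrable \<mu> (\<lambda>x. 1/2 * ?IW x)" using iW by simp
    show "integrable \<mu> (\<lambda>x. q\<^sup>2 / 8 * (?IA x + ?IAr x))" using iA iAr by simp
    fix x assume x: "x \<in> space \<mu>"
    have "1/2 * ?IW x \<le> 1/2 * (q\<^sup>2 / 4 * (?IA x + ?IAr x))" using step1[OF x] by simp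
    also have "\<dots> = q\<^sup>2 / 8 * (?IA x + ?IAr x)" by simp
    finally show "1/2 * ?IW x \<le> q\<^sup>2 / 8 * (?IA x + ?IAr x)" .
  qed
  also have "\<dots> = q\<^sup>2 / 8 * ((\<integral>x. ?IA x \<partial>\<mu>) + (\<integral>x. ?IAr x \<partial>\<mu>))"
    using iA iAr by simp
  also have "(\<integral>x. ?IAr x \<partial>\<mu>) = (\<integral>x. (\<integral>y. Ar (glue n I x y, x) \<partial>m (xbar n I x)) \<partial>\<mu>)"
    by (rule swapL[OF Arm Ar0])
  also have "\<dots> = (\<integral>x. ?IA x \<partial>\<mu>)"
    unfolding A_def Ar_def by (simp add: power2_commute)
  also have "q\<^sup>2 / 8 * ((\<integral>x. ?IA x \<partial>\<mu>) + (\<integral>x. ?IA x \<partial>\<mu>)) = q\<^sup>2 / 4 * (\<integral>x. ?IA x \<partial>\<mu>)"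
    by simp
  also have "(\<integral>x. ?IA x \<partial>\<mu>) = (\<integral>x. \<bar>g x\<bar> powr (q - 2) * (2 * (partialI n I m g x)\<^sup>2) \<partial>\<mu>)"
    unfolding A_def partial_sq by (simp add: mult.commute)
  also have "\<dots> = 2 * (\<integral>x. \<bar>g x\<bar> powr (q - 2) * (partialI n I m g x)\<^sup>2 \<partial>\<mu>)"
    by (simp only: mult.left_commute[of _ 2] integral_mult_right_zero)
  also have "q\<^sup>2 / 4 * \<dots> = q\<^sup>2 / 2 * (\<integral>x. \<bar>g x\<bar> powr (q - 2) * (partialI n I m g x)\<^sup>2 \<partial>\<mu>)"
    by simp
  finally show ?thesis unfolding w_def .
qed

end

context dsetup begin

lemma K_meas: "(\<lambda>x. m (xbar n I x) \<Otimes>\<^sub>M m (xbar n I x)) \<in> measurable \<mu> (subprob_algebra (Y \<Otimes>\<^sub>M Y))"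
  by (rule measurable_pair_measure[OF L_meas L_meas])

lemma Phi_meas:
  fixes u :: "(nat \<Rightarrow> 'a) \<Rightarrow> real"
  assumes u: "u \<in> borel_measurable \<mu>"
  shows "(\<lambda>v. ereal \<bar>u (glue n I (fst v) (fst (snd v))) - u (glue n I (fst v) (snd (snd v)))\<bar>)
           \<in> borel_measurable (\<mu> \<Otimes>\<^sub>M (Y \<Otimes>\<^sub>M Y))"
proof -
  have gm: "(\<lambda>w. glue n I (fst w) (snd w)) \<in> measurable (\<mu> \<Otimes>\<^sub>M Y) \<mu>"
    using glue_meas by (simp add: split_beta')
  have "(\<lambda>v. (fst v, fst (snd v))) \<in> measurable (\<mu> \<Otimes>\<^sub>M (Y \<Otimes>\<^sub>M Y)) (\<mu> \<Otimes>\<^sub>M Y)"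
    by (intro measurable_Pair measurable_fst measurable_compose[OF measurable_snd measurable_fst])
  from measurable_comp[OF this gm]
  have g1: "(\<lambda>v. glue n I (fst v) (fst (snd v))) \<in> measurable (\<mu> \<Otimes>\<^sub>M (Y \<Otimes>\<^sub>M Y)) \<mu>"
    by (simp add: comp_def)
  have "(\<lambda>v. (fst v, snd (snd v))) \<in> measurable (\<mu> \<Otimes>\<^sub>M (Y \<Otimes>\<^sub>M Y)) (\<mu> \<Otimes>\<^sub>M Y)"
    by (intro measurable_Pair measurable_fst measurable_compose[OF measurable_snd measurable_snd])
  from measurable_comp[OF this gm]
  have g2: "(\<lambda>v. glue n I (fst v) (snd (snd v))) \<in> measurable (\<mu> \<Otimes>\<^sub>M (Y \<Otimes>\<^sub>M Y)) \<mu>"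
    by (simp add: comp_def)
  note [measurable] = measurable_compose[OF g1 u] measurable_compose[OF g2 u]
  show ?thesis by measurable
qed

lemma Phi_slice:
  fixes u :: "(nat \<Rightarrow> 'a) \<Rightarrow> real"
  assumes u: "u \<in> borel_measurable \<mu>" and x: "x \<in> space \<mu>"
  shows "(\<lambda>w. ereal \<bar>u (glue n I x (fst w)) - u (glue n I x (snd w))\<bar>)
           \<in> borel_measurable (m (xbar n I x) \<Otimes>\<^sub>M m (xbar n I x))"
proof -
  note [measurable] = H2_meas[OF u]
  have "(\<lambda>p. ereal \<bar>u (fst p) - u (snd p)\<bar>) \<in> borel_measurable (\<mu> \<Otimes>\<^sub>M \<mu>)" by measurable
  from inner_meas[OF this x] show ?thesis by simp
qed

lemma E_meas:
  fixes u :: "(nat \<Rightarrow> 'a) \<Rightarrow> real"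
  assumes u: "u \<in> borel_measurable \<mu>"
  shows "(\<lambda>x. esssup (m (xbar n I x) \<Otimes>\<^sub>M m (xbar n I x))
            (\<lambda>w. ereal \<bar>u (glue n I x (fst w)) - u (glue n I x (snd w))\<bar>)) \<in> borel_measurable \<mu>"
proof -
  define \<Phi> where "\<Phi> x w = ereal \<bar>u (glue n I x (fst w)) - u (glue n I x (snd w))\<bar>" for x w
  define KK where "KK x = m (xbar n I x) \<Otimes>\<^sub>M m (xbar n I x)" for x
  have Pm: "(\<lambda>v. \<Phi> (fst v) (snd v)) \<in> borel_measurable (\<mu> \<Otimes>\<^sub>M (Y \<Otimes>\<^sub>M Y))"
    unfolding \<Phi>_def by (rule Phi_meas[OF u])
  have Km: "KK \<in> measurable \<mu> (subprob_algebra (Y \<Otimes>\<^sub>M Y))"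
    unfolding KK_def[abs_def] by (rule K_meas)
  have sl: "\<Phi> x \<in> borel_measurable (KK x)" if "x \<in> space \<mu>" for x
    unfolding \<Phi>_def[abs_def] KK_def using Phi_slice[OF u that] by simp
  have setK: "{w \<in> space (KK x). c < \<Phi> x w} \<in> sets (KK x)" if x: "x \<in> space \<mu>" for x c
  proof -
    note [measurable] = sl[OF x]
    show ?thesis by measurable
  qed
  have emm: "(\<lambda>x. emeasure (KK x) {w \<in> space (KK x). c < \<Phi> x w}) \<in> borel_measurable \<mu>" for c
  proof -
    note [measurable] = Pm
    have "(\<lambda>v. (if c < \<Phi> (fst v) (snd v) then 1 else 0) :: ennreal) \<in> borel_measurable (\<mu> \<Otimes>\<^sub>M (Y \<Otimes>\<^sub>M Y))"
      by measurable
    then have "(\<lambda>x. \<integral>\<^sup>+w. (if c < \<Phi> x w then 1 else 0 :: ennreal) \<partial>KK x) \<in> borel_measurable \<mu>"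
      using nn_integral_measurable_subprob_algebra2[OF _ Km, of "\<lambda>x w. if c < \<Phi> x w then 1 else 0 :: ennreal"]
      by (simp add: split_beta')
    moreover have "(\<integral>\<^sup>+w. (if c < \<Phi> x w then 1 else 0 :: ennreal) \<partial>KK x) =
        emeasure (KK x) {w \<in> space (KK x). c < \<Phi> x w}" if x: "x \<in> space \<mu>" for x
    proof -
      have "(\<integral>\<^sup>+w. (if c < \<Phi> x w then 1 else 0 :: ennreal) \<partial>KK x) =
            (\<integral>\<^sup>+w. indicator {w \<in> space (KK x). c < \<Phi> x w} w \<partial>KK x)"
        by (rule nn_integral_cong) (simp add: indicator_def)
      also have "\<dots> = emeasure (KK x) {w \<in> space (KK x). c < \<Phi> x w}"
        by (rule nn_integral_indicator[OF setK[OF x]])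
      finally show ?thesis .
    qed
    ultimately show ?thesis by (subst measurable_cong[symmetric]) auto
  qed
  have key: "esssup (KK x) (\<Phi> x) < a \<longleftrightarrow>
      (\<exists>r::rat. ereal (real_of_rat r) < a \<and> emeasure (KK x) {w \<in> space (KK x). ereal (real_of_rat r) < \<Phi> x w} = 0)"
    if x: "x \<in> space \<mu>" for x a
  proof -
    have eq: "esssup (KK x) (\<Phi> x) = Inf {c. emeasure (KK x) {w \<in> space (KK x). c < \<Phi> x w} = 0}"
      by (rule esssup_eq[OF sl[OF x]])
    show ?thesis
    proof
      assume "esssup (KK x) (\<Phi> x) < a"
      then obtain c where c: "emeasure (KK x) {w \<in> space (KK x). c < \<Phi> x w} = 0" "c < a"
        unfolding eq Inf_less_iff by auto
      obtain r :: rat where r: "c < ereal (real_of_rat r)" "ereal (real_of_rat r) < a"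
        using ereal_dense3[OF c(2)] by auto
      have "emeasure (KK x) {w \<in> space (KK x). ereal (real_of_rat r) < \<Phi> x w} = 0"
        by (rule emeasure_eq_0[OF setK[OF x] c(1)]) (use r in auto)
      then show "\<exists>r::rat. ereal (real_of_rat r) < a \<and> emeasure (KK x) {w \<in> space (KK x). ereal (real_of_rat r) < \<Phi> x w} = 0"
        using r by blast
    next
      assume "\<exists>r::rat. ereal (real_of_rat r) < a \<and> emeasure (KK x) {w \<in> space (KK x). ereal (real_of_rat r) < \<Phi> x w} = 0"
      then obtain r :: rat where r: "ereal (real_of_rat r) < a"
        "emeasure (KK x) {w \<in> space (KK x). ereal (real_of_rat r) < \<Phi> x w} = 0" by blast
      have "esssup (KK x) (\<Phi> x) \<le> ereal (real_of_rat r)"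
        unfolding eq by (rule Inf_lower) (use r in simp)
      then show "esssup (KK x) (\<Phi> x) < a" using r(1) by simp
    qed
  qed
  have "(\<lambda>x. esssup (KK x) (\<Phi> x)) \<in> borel_measurable \<mu>"
  proof (rule borel_measurableI_less)
    fix a :: ereal
    have "{x \<in> space \<mu>. esssup (KK x) (\<Phi> x) < a} =
       (\<Union>r\<in>UNIV. {x \<in> space \<mu>. ereal (real_of_rat r) < a \<and> emeasure (KK x) {w \<in> space (KK x). ereal (real_of_rat r) < \<Phi> x w} = 0})"
      using key by auto
    also have "\<dots> \<in> sets \<mu>"
    proof (rule sets.countable_UN')
      show "countable (UNIV :: rat set)" by simp
      show "(\<lambda>r. {x \<in> space \<mu>. ereal (real_of_rat r) < a \<and> emeasure (KK x) {w \<in> space (KK x). ereal (real_of_rat r) < \<Phi> x w} = 0}) ` UNIV \<subseteq> sets \<mu>"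
      proof safe
        fix r :: rat
        note [measurable] = emm[of "ereal (real_of_rat r)"]
        show "{x \<in> space \<mu>. ereal (real_of_rat r) < a \<and> emeasure (KK x) {w \<in> space (KK x). ereal (real_of_rat r) < \<Phi> x w} = 0} \<in> sets \<mu>"
          by measurable
      qed
    qed
    finally show "{x \<in> space \<mu>. esssup (KK x) (\<Phi> x) < a} \<in> sets \<mu>" .
  qed
  then show ?thesis unfolding \<Phi>_def KK_def .
qed

lemma hI_meas:
  fixes u :: "(nat \<Rightarrow> 'a) \<Rightarrow> real"
  assumes u: "u \<in> borel_measurable \<mu>"
  shows "hI n I m u \<in> borel_measurable \<mu>"
proof -
  note [measurable] = E_meas[OF u]
  show ?thesis unfolding hI_def[abs_def] split_beta' by measurable
qed

end

context dsetup begin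

lemma partial_le_h:
  fixes g :: "(nat \<Rightarrow> 'a) \<Rightarrow> real"
  assumes g: "g \<in> borel_measurable \<mu>" and bd: "\<And>x. \<bar>g x\<bar> \<le> C"
  shows "AE x in \<mu>. (partialI n I m g x)\<^sup>2 \<le> (hI n I m g x)\<^sup>2"
proof -
  define \<Phi> where "\<Phi> x w = ereal \<bar>g (glue n I x (fst w)) - g (glue n I x (snd w))\<bar>" for x w
  define KK where "KK x = m (xbar n I x) \<Otimes>\<^sub>M m (xbar n I x)" for x
  define E where "E x = esssup (KK x) (\<Phi> x)" for x
  have Em: "E \<in> borel_measurable \<mu>"
    unfolding E_def[abs_def] KK_def \<Phi>_def using E_meas[OF g] .
  have Eg: "E (glue n I x y) = E x" for x y
    unfolding E_def KK_def \<Phi>_def by simp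
  have sl: "\<Phi> x \<in> borel_measurable (KK x)" if "x \<in> space \<mu>" for x
    unfolding \<Phi>_def[abs_def] KK_def using Phi_slice[OF g that] by simp
  define \<beta> :: "(nat \<Rightarrow> 'a) \<times> (nat \<Rightarrow> 'a) \<Rightarrow> ennreal"
    where "\<beta> p = (if E (fst p) < ereal \<bar>g (fst p) - g (snd p)\<bar> then 1 else 0)" for p
  have \<beta>m: "\<beta> \<in> borel_measurable (\<mu> \<Otimes>\<^sub>M \<mu>)"
  proof -
    note [measurable] = H2_meas[OF g] measurable_compose[OF measurable_fst Em]
    show ?thesis unfolding \<beta>_def[abs_def] by measurable
  qed
  define \<Psi> where "\<Psi> x = (\<integral>\<^sup>+y. \<beta> (x, glue n I x y) \<partial>m (xbar n I x))" for x
  have \<Psi>m: "\<Psi> \<in> borel_measurable \<mu>"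
    unfolding \<Psi>_def[abs_def] using kernel_meas[of "\<lambda>x y. \<beta> (x, glue n I x y)"] pair_glue_meas[OF \<beta>m]
    by (simp add: split_beta')
  have "(\<integral>\<^sup>+x. \<Psi> x \<partial>\<mu>) = (\<integral>\<^sup>+x. (\<integral>\<^sup>+y'. \<Psi> (glue n I x y') \<partial>m (xbar n I x)) \<partial>\<mu>)"
    by (rule disint[OF \<Psi>m])
  also have "\<dots> = (\<integral>\<^sup>+x. 0 \<partial>\<mu>)"
  proof (rule nn_integral_cong)
    fix x assume x: "x \<in> space \<mu>"
    interpret pair_sigma_finite "m (xbar n I x)" "m (xbar n I x)"
      using m_prob[OF xbar_space[OF x]] by (simp add: pair_sigma_finite_def prob_space_imp_sigma_finite)
    have ind: "(\<lambda>w. if E x < \<Phi> x w then 1 else 0 :: ennreal) \<in> borel_measurable (KK x)"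
    proof -
      note [measurable] = sl[OF x]
      show ?thesis by measurable
    qed
    have setK: "{w \<in> space (KK x). E x < \<Phi> x w} \<in> sets (KK x)"
    proof -
      note [measurable] = sl[OF x]
      show ?thesis by measurable
    qed
    have "(\<integral>\<^sup>+y'. \<Psi> (glue n I x y') \<partial>m (xbar n I x)) =
          (\<integral>\<^sup>+y'. (\<integral>\<^sup>+y. (if E x < \<Phi> x (y', y) then 1 else 0 :: ennreal) \<partial>m (xbar n I x)) \<partial>m (xbar n I x))"
      unfolding \<Psi>_def \<beta>_def \<Phi>_def by (simp add: Eg)
    also have "\<dots> = (\<integral>\<^sup>+w. (if E x < \<Phi> x w then 1 else 0 :: ennreal) \<partial>KK x)"
      unfolding KK_def
      by (rule sigma_finite_measure.nn_integral_fst[OF prob_space_imp_sigma_finite[OF m_prob[OF xbar_space[OF x]]] ind[unfolded KK_def]])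
    also have "\<dots> = (\<integral>\<^sup>+w. indicator {w \<in> space (KK x). E x < \<Phi> x w} w \<partial>KK x)"
      by (rule nn_integral_cong) (simp add: indicator_def)
    also have "\<dots> = emeasure (KK x) {w \<in> space (KK x). E x < \<Phi> x w}"
      by (rule nn_integral_indicator[OF setK])
    also have "\<dots> = 0" unfolding E_def by (rule esssup_zero_measure)
    finally show "(\<integral>\<^sup>+y'. \<Psi> (glue n I x y') \<partial>m (xbar n I x)) = 0" .
  qed
  finally have "AE x in \<mu>. \<Psi> x = 0" using nn_integral_0_iff_AE[OF \<Psi>m] by simp
  then show ?thesis
  proof (rule AE_mp, intro AE_I2 impI)
    fix x assume x: "x \<in> space \<mu>" and z: "\<Psi> x = 0"
    interpret mp: prob_space "m (xbar n I x)" by (rule m_prob[OF xbar_space[OF x]])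
    have bm: "(\<lambda>y. \<beta> (x, glue n I x y)) \<in> borel_measurable (m (xbar n I x))"
      using kslice[OF _ x, of "\<lambda>x y. \<beta> (x, glue n I x y)"] pair_glue_meas[OF \<beta>m] by simp
    have "AE y in m (xbar n I x). \<beta> (x, glue n I x y) = 0"
      using z nn_integral_0_iff_AE[OF bm] unfolding \<Psi>_def by simp
    then have ae: "AE y in m (xbar n I x). ereal \<bar>g x - g (glue n I x y)\<bar> \<le> E x"
      by (rule AE_mp) (intro AE_I2 impI, simp add: \<beta>_def not_less split: if_splits)
    have "AE y in m (xbar n I x). 0 \<le> E x"
      using ae by (rule AE_mp) (intro AE_I2 impI, metis abs_ge_zero ereal_less_eq(5) order.trans)
    then have E0: "0 \<le> E x" by simp
    have "E x \<le> ereal (2 * C)"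
      unfolding E_def
    proof (rule esssup_I[OF sl[OF x]], intro AE_I2)
      fix w show "\<Phi> x w \<le> ereal (2 * C)"
        unfolding \<Phi>_def using bd[of "glue n I x (fst w)"] bd[of "glue n I x (snd w)"] by simp
    qed
    with E0 obtain e where e: "E x = ereal e" "0 \<le> e" by (cases "E x") auto
    have D2m: "(\<lambda>y. (g x - g (glue n I x y))\<^sup>2) \<in> borel_measurable (m (xbar n I x))"
      using kslice[OF _ x, of "\<lambda>x y. (g x - g (glue n I x y))\<^sup>2"] D2_meas[OF g] by simp
    have b4: "\<bar>(g x - g (glue n I x y))\<^sup>2\<bar> \<le> 4 * C\<^sup>2" for y
    proof -
      have "\<bar>g x - g (glue n I x y)\<bar> \<le> 2 * C" using bd[of x] bd[of "glue n I x y"] by simp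
      then have "\<bar>g x - g (glue n I x y)\<bar>\<^sup>2 \<le> (2 * C)\<^sup>2" by (intro power_mono) auto
      then show ?thesis by (simp add: power_mult_distrib)
    qed
    have int: "integrable (m (xbar n I x)) (\<lambda>y. (g x - g (glue n I x y))\<^sup>2)"
      by (rule integrable_bnd[OF m_prob[OF xbar_space[OF x]] D2m b4])
    have "(\<integral>y. (g x - g (glue n I x y))\<^sup>2 \<partial>m (xbar n I x)) \<le> e\<^sup>2"
    proof (rule mp.integral_le_const[OF int])
      show "AE y in m (xbar n I x). (g x - g (glue n I x y))\<^sup>2 \<le> e\<^sup>2"
        using ae
      proof (rule AE_mp, intro AE_I2 impI)
        fix y assume "ereal \<bar>g x - g (glue n I x y)\<bar> \<le> E x"
        then have "\<bar>g x - g (glue n I x y)\<bar> \<le> e" using e by simp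
        then have "\<bar>g x - g (glue n I x y)\<bar>\<^sup>2 \<le> e\<^sup>2" by (intro power_mono) auto
        then show "(g x - g (glue n I x y))\<^sup>2 \<le> e\<^sup>2" by simp
      qed
    qed
    then have "(partialI n I m g x)\<^sup>2 \<le> e\<^sup>2 / 2" unfolding partial_sq by simp
    moreover have "hI n I m g x = 1 / sqrt 2 * e"
      unfolding hI_def split_beta' using e unfolding E_def KK_def \<Phi>_def by simp
    moreover have "(1 / sqrt 2 * e)\<^sup>2 = e\<^sup>2 / 2" by (simp add: power_mult_distrib power_divide)
    ultimately show "(partialI n I m g x)\<^sup>2 \<le> (hI n I m g x)\<^sup>2" by simp
  qed
qed

end

context dsetup begin

lemma trunc_partial:
  fixes f g :: "(nat \<Rightarrow> 'a) \<Rightarrow> real"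
  assumes f: "f \<in> borel_measurable \<mu>" and g: "g \<in> borel_measurable \<mu>" and ae: "AE x in \<mu>. f x = g x"
  shows "AE x in \<mu>. partialI n I m f x = partialI n I m g x"
proof -
  have "AE x in \<mu>. AE y in m (xbar n I x). f (glue n I x y) = g (glue n I x y)"
    by (rule AE_transfer[OF ae])
  with ae have "AE x in \<mu>. f x = g x \<and> (AE y in m (xbar n I x). f (glue n I x y) = g (glue n I x y))"
    by eventually_elim simp
  then show ?thesis
  proof (rule AE_mp, intro AE_I2 impI)
    fix x assume x: "x \<in> space \<mu>" and h: "f x = g x \<and> (AE y in m (xbar n I x). f (glue n I x y) = g (glue n I x y))"
    have fm: "(\<lambda>y. (f x - f (glue n I x y))\<^sup>2) \<in> borel_measurable (m (xbar n I x))"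
      using kslice[OF _ x, of "\<lambda>x y. (f x - f (glue n I x y))\<^sup>2"] D2_meas[OF f] by simp
    have gm: "(\<lambda>y. (g x - g (glue n I x y))\<^sup>2) \<in> borel_measurable (m (xbar n I x))"
      using kslice[OF _ x, of "\<lambda>x y. (g x - g (glue n I x y))\<^sup>2"] D2_meas[OF g] by simp
    have h2: "AE y in m (xbar n I x). f (glue n I x y) = g (glue n I x y)" using h by simp
    have "AE y in m (xbar n I x). (f x - f (glue n I x y))\<^sup>2 = (g x - g (glue n I x y))\<^sup>2"
      using h2 by (rule AE_mp) (intro AE_I2 impI, simp add: h)
    then have "(\<integral>y. (f x - f (glue n I x y))\<^sup>2 \<partial>m (xbar n I x)) = (\<integral>y. (g x - g (glue n I x y))\<^sup>2 \<partial>m (xbar n I x))"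
      by (rule integral_cong_AE[OF fm gm])
    then show "partialI n I m f x = partialI n I m g x" unfolding partialI_def by simp
  qed
qed

lemma trunc_h:
  fixes f g :: "(nat \<Rightarrow> 'a) \<Rightarrow> real"
  assumes f: "f \<in> borel_measurable \<mu>" and g: "g \<in> borel_measurable \<mu>" and ae: "AE x in \<mu>. f x = g x"
  shows "AE x in \<mu>. hI n I m f x = hI n I m g x"
proof -
  have "AE x in \<mu>. AE y in m (xbar n I x). f (glue n I x y) = g (glue n I x y)"
    by (rule AE_transfer[OF ae])
  then show ?thesis
  proof (rule AE_mp, intro AE_I2 impI)
    fix x assume x: "x \<in> space \<mu>" and h: "AE y in m (xbar n I x). f (glue n I x y) = g (glue n I x y)"
    interpret pair_sigma_finite "m (xbar n I x)" "m (xbar n I x)"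
      using m_prob[OF xbar_space[OF x]] by (simp add: pair_sigma_finite_def prob_space_imp_sigma_finite)
    note [measurable] = Phi_slice[OF f x] Phi_slice[OF g x]
    have "AE w in m (xbar n I x) \<Otimes>\<^sub>M m (xbar n I x).
       ereal \<bar>f (glue n I x (fst w)) - f (glue n I x (snd w))\<bar> = ereal \<bar>g (glue n I x (fst w)) - g (glue n I x (snd w))\<bar>"
    proof (rule AE_pair_measure)
      show "{w \<in> space (m (xbar n I x) \<Otimes>\<^sub>M m (xbar n I x)).
         ereal \<bar>f (glue n I x (fst w)) - f (glue n I x (snd w))\<bar> = ereal \<bar>g (glue n I x (fst w)) - g (glue n I x (snd w))\<bar>}
         \<in> sets (m (xbar n I x) \<Otimes>\<^sub>M m (xbar n I x))" by measurable
      show "AE y in m (xbar n I x). AE z in m (xbar n I x).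
         ereal \<bar>f (glue n I x (fst (y, z))) - f (glue n I x (snd (y, z)))\<bar> =
         ereal \<bar>g (glue n I x (fst (y, z))) - g (glue n I x (snd (y, z)))\<bar>"
        using h
      proof eventually_elim
        case (elim y)
        show ?case using h by eventually_elim (simp add: elim)
      qed
    qed
    then have "esssup (m (xbar n I x) \<Otimes>\<^sub>M m (xbar n I x)) (\<lambda>w. ereal \<bar>f (glue n I x (fst w)) - f (glue n I x (snd w))\<bar>) =
               esssup (m (xbar n I x) \<Otimes>\<^sub>M m (xbar n I x)) (\<lambda>w. ereal \<bar>g (glue n I x (fst w)) - g (glue n I x (snd w))\<bar>)"
      by (rule esssup_AE_cong[rotated 2]) measurable
    then show "hI n I m f x = hI n I m g x" unfolding hI_def split_beta' by simp
  qed
qed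

end

lemma deriv_F:
  fixes g :: "'b \<Rightarrow> real"
  assumes M: "prob_space M" and g: "g \<in> borel_measurable M" and bd: "\<And>x. \<bar>g x\<bar> \<le> C" and q0: "2 \<le> q0"
  shows "((\<lambda>q. \<integral>x. \<bar>g x\<bar> powr q \<partial>M) has_real_derivative (\<integral>x. \<bar>g x\<bar> powr q0 * ln \<bar>g x\<bar> \<partial>M)) (at q0)"
proof -
  interpret prob_space M by fact
  define C' where "C' = max C 1"
  have C'1: "1 \<le> C'" unfolding C'_def by simp
  have bd': "\<bar>g x\<bar> \<le> C'" for x using bd[of x] unfolding C'_def by simp
  define K where "K = 4 + C' powr (q0 + 1) * C'\<^sup>2"
  note [measurable] = g
  have intq: "integrable M (\<lambda>x. \<bar>g x\<bar> powr q)" if "0 \<le> q" for q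
    by (rule integrable_bnd[OF M, where B="C' powr q"]) (use bd' that in \<open>auto intro!: powr_mono2\<close>)
  have intd: "integrable M (\<lambda>x. \<bar>g x\<bar> powr q0 * ln \<bar>g x\<bar>)"
    by (rule integrable_bnd[OF M, where B="1 + C' powr q0 * C'"]) (use bd' C'1 q0 in \<open>auto intro!: pw_first\<close>)
  let ?F = "\<lambda>q. \<integral>x. \<bar>g x\<bar> powr q \<partial>M"
  let ?F' = "\<integral>x. \<bar>g x\<bar> powr q0 * ln \<bar>g x\<bar> \<partial>M"
  have est: "\<bar>(?F (q0 + h) - ?F q0) / h - ?F'\<bar> \<le> K * \<bar>h\<bar>" if h: "h \<noteq> 0" "\<bar>h\<bar> \<le> 1/2" for h
  proof -
    have "?F (q0 + h) - ?F q0 - h * ?F' =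
          (\<integral>x. \<bar>g x\<bar> powr (q0 + h) - \<bar>g x\<bar> powr q0 - h * (\<bar>g x\<bar> powr q0 * ln \<bar>g x\<bar>) \<partial>M)"
      using intq[of "q0 + h"] intq[of q0] intd h q0 by simp
    also have "\<bar>\<dots>\<bar> \<le> K * h\<^sup>2"
      by (rule integral_bnd[OF M]) (use bd' C'1 q0 h in \<open>auto simp: K_def intro!: taylor_pt\<close>)
    finally have "\<bar>?F (q0 + h) - ?F q0 - h * ?F'\<bar> \<le> K * h\<^sup>2" .
    moreover have "(?F (q0 + h) - ?F q0) / h - ?F' = (?F (q0 + h) - ?F q0 - h * ?F') / h"
      using h by (simp add: field_simps)
    ultimately show ?thesis using h
      by (simp add: abs_divide divide_le_eq power2_eq_square mult.assoc)
  qed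
  have "((\<lambda>h. (?F (q0 + h) - ?F q0) / h - ?F') \<longlongrightarrow> 0) (at 0)"
  proof (rule Lim_null_comparison)
    show "\<forall>\<^sub>F h in at 0. norm ((?F (q0 + h) - ?F q0) / h - ?F') \<le> K * \<bar>h\<bar>"
      unfolding eventually_at by (intro exI[of _ "1/2"]) (auto intro!: est)
    show "((\<lambda>h. K * \<bar>h\<bar>) \<longlongrightarrow> 0) (at 0)"
      by (auto intro!: tendsto_eq_intros)
  qed
  then show ?thesis unfolding DERIV_def by (simp add: LIM_zero_iff)
qed


lemma holder:
  fixes a b :: "'b \<Rightarrow> real"
  assumes M: "prob_space M" and am: "a \<in> borel_measurable M" and bm: "b \<in> borel_measurable M"
    and a0: "\<And>x. 0 \<le> a x" and b0: "\<And>x. 0 \<le> b x"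
    and st: "1 < s" "1 < t" "1/s + 1/t = 1"
    and ia: "integrable M (\<lambda>x. a x powr s)" and ib: "integrable M (\<lambda>x. b x powr t)"
    and iab: "integrable M (\<lambda>x. a x * b x)"
  shows "(\<integral>x. a x * b x \<partial>M) \<le> (\<integral>x. a x powr s \<partial>M) powr (1/s) * (\<integral>x. b x powr t \<partial>M) powr (1/t)"
proof -
  interpret prob_space M by fact
  define A where "A = (\<integral>x. a x powr s \<partial>M)"
  define B where "B = (\<integral>x. b x powr t \<partial>M)"
  have A0: "0 \<le> A" unfolding A_def by (intro integral_nonneg_AE) simp
  have B0: "0 \<le> B" unfolding B_def by (intro integral_nonneg_AE) simp
  show ?thesis
  proof (cases "A = 0 \<or> B = 0")
    case True
    have "AE x in M. a x * b x = 0"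
    proof (cases "A = 0")
      case True
      then have "AE x in M. a x powr s = 0"
        using integral_nonneg_eq_0_iff_AE[OF ia] unfolding A_def by simp
      then show ?thesis by (rule AE_mp) (intro AE_I2 impI, simp)
    next
      case False
      with True have "B = 0" by simp
      then have "AE x in M. b x powr t = 0"
        using integral_nonneg_eq_0_iff_AE[OF ib] unfolding B_def by simp
      then show ?thesis by (rule AE_mp) (intro AE_I2 impI, simp)
    qed
    then have "(\<integral>x. a x * b x \<partial>M) = 0" by (simp add: integral_eq_zero_AE)
    then show ?thesis using A0 B0 by (simp add: A_def[symmetric] B_def[symmetric])
  next
    case False
    then have Ap: "0 < A" and Bp: "0 < B" using A0 B0 by auto
    define \<alpha> where "\<alpha> = A powr (1/s)"
    define \<beta> where "\<beta> = B powr (1/t)"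
    have \<alpha>p: "0 < \<alpha>" and \<beta>p: "0 < \<beta>" unfolding \<alpha>_def \<beta>_def using Ap Bp by auto
    have \<alpha>s: "\<alpha> powr s = A" unfolding \<alpha>_def using Ap st by (simp add: powr_powr)
    have \<beta>t: "\<beta> powr t = B" unfolding \<beta>_def using Bp st by (simp add: powr_powr)
    have pt: "a x * b x / (\<alpha> * \<beta>) \<le> a x powr s / (s * A) + b x powr t / (t * B)" for x
    proof -
      have "(a x / \<alpha>) * (b x / \<beta>) \<le> (a x / \<alpha>) powr s / s + (b x / \<beta>) powr t / t"
        using a0[of x] b0[of x] \<alpha>p \<beta>p st by (intro Youngs_inequality) auto
      also have "(a x / \<alpha>) powr s = a x powr s / A" using a0[of x] \<alpha>p \<alpha>s by (simp add: powr_divide)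
      also have "(b x / \<beta>) powr t = b x powr t / B" using b0[of x] \<beta>p \<beta>t by (simp add: powr_divide)
      finally show ?thesis by (simp add: field_simps)
    qed
    have "(\<integral>x. a x * b x \<partial>M) / (\<alpha> * \<beta>) = (\<integral>x. a x * b x / (\<alpha> * \<beta>) \<partial>M)" by simp
    also have "\<dots> \<le> (\<integral>x. a x powr s / (s * A) + b x powr t / (t * B) \<partial>M)"
      by (rule integral_mono) (use iab ia ib pt in auto)
    also have "\<dots> = A / (s * A) + B / (t * B)"
      using ia ib unfolding A_def B_def by simp
    also have "\<dots> = 1" using Ap Bp st by simp
    finally have "(\<integral>x. a x * b x \<partial>M) \<le> \<alpha> * \<beta>" using \<alpha>p \<beta>p by (simp add: divide_le_eq)
    then show ?thesis unfolding \<alpha>_def \<beta>_def A_def B_def .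
  qed
qed


locale msetup =
  fixes X :: "nat \<Rightarrow> 'a topology" and n :: nat and \<mu> :: "(nat \<Rightarrow> 'a) measure"
    and \<I> :: "nat set set" and m :: "nat set \<Rightarrow> (nat \<Rightarrow> 'a) \<Rightarrow> (nat \<Rightarrow> 'a) measure"
    and \<sigma>2 :: real and g :: "(nat \<Rightarrow> 'a) \<Rightarrow> real" and C :: real
  assumes P: "prob_space \<mu>" and S: "sets \<mu> = sets (prodM X {1..n})"
    and sub: "\<I> \<subseteq> Pow {1..n}" and dis: "\<forall>I\<in>\<I>. is_disintegration X n \<mu> I (m I)"
    and lsi: "LSI n \<mu> \<I> m \<sigma>2" and \<sigma>: "\<sigma>2 > 0"
    and gm: "g \<in> borel_measurable \<mu>" and bd: "\<And>x. \<bar>g x\<bar> \<le> C"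
begin

lemma ds: "I \<in> \<I> \<Longrightarrow> dsetup X n \<mu> I (m I)"
  unfolding dsetup_def using P S sub dis by auto

lemma fin: "finite \<I>"
  by (rule finite_subset[OF sub]) simp

lemma C0: "0 \<le> C" using bd[of undefined] by simp

lemma grad_sq: "(grad_norm n \<I> m u x)\<^sup>2 = (\<Sum>I\<in>\<I>. (partialI n I (m I) u x)\<^sup>2)"
proof -
  have "0 \<le> (\<Sum>I\<in>\<I>. (partialI n I (m I) u x)\<^sup>2)"
    apply (rule sum_nonneg)
    apply simp
    done
  then show ?thesis unfolding grad_norm_def by simp
qed

lemma grad_nonneg: "0 \<le> grad_norm n \<I> m u x"
proof -
  have "0 \<le> (\<Sum>I\<in>\<I>. (partialI n I (m I) u x)\<^sup>2)" by (rule sum_nonneg) simp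
  then show ?thesis unfolding grad_norm_def by simp
qed

lemma grad_meas:
  fixes u :: "(nat \<Rightarrow> 'a) \<Rightarrow> real"
  assumes u: "u \<in> borel_measurable \<mu>"
  shows "grad_norm n \<I> m u \<in> borel_measurable \<mu>"
proof -
  have [measurable]: "partialI n I (m I) u \<in> borel_measurable \<mu>" if "I \<in> \<I>" for I
    using dsetup.partial_meas[OF ds[OF that] u] .
  show ?thesis unfolding grad_norm_def[abs_def] by measurable
qed

lemma grad_sq_bnd:
  fixes u :: "(nat \<Rightarrow> 'a) \<Rightarrow> real" and B :: real
  assumes u: "u \<in> borel_measurable \<mu>" and b: "\<And>x. \<bar>u x\<bar> \<le> B" and x: "x \<in> space \<mu>"
  shows "(grad_norm n \<I> m u x)\<^sup>2 \<le> card \<I> * (2 * B\<^sup>2)"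
proof -
  have "(\<Sum>I\<in>\<I>. (partialI n I (m I) u x)\<^sup>2) \<le> (\<Sum>I\<in>\<I>. 2 * B\<^sup>2)"
    by (rule sum_mono) (rule dsetup.partial_sq_bnd[OF ds u b x])
  then show ?thesis unfolding grad_sq by simp
qed

end

context msetup begin

lemma L1:
  assumes q: "2 \<le> q"
  shows "(\<integral>x. (grad_norm n \<I> m (\<lambda>x. \<bar>g x\<bar> powr (q/2)) x)\<^sup>2 \<partial>\<mu>)
      \<le> q\<^sup>2 / 2 * (\<integral>x. \<bar>g x\<bar> powr (q - 2) * (grad_norm n \<I> m g x)\<^sup>2 \<partial>\<mu>)"
proof -
  define w where "w = (\<lambda>x. \<bar>g x\<bar> powr (q/2))"
  note [measurable] = gm
  have wm: "w \<in> borel_measurable \<mu>" unfolding w_def by measurable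
  have wb: "\<bar>w x\<bar> \<le> C powr (q/2)" for x
    unfolding w_def using bd[of x] q by (auto intro!: powr_mono2)
  have pb: "\<bar>g x\<bar> powr (q - 2) \<le> C powr (q - 2)" for x
    using bd[of x] q by (auto intro!: powr_mono2)
  have int1: "integrable \<mu> (\<lambda>x. (partialI n I (m I) w x)\<^sup>2)" if I: "I \<in> \<I>" for I
  proof (rule integrable_bnd[OF P, where B="2 * (C powr (q/2))\<^sup>2"])
    note [measurable] = dsetup.partial_meas[OF ds[OF I] wm]
    show "(\<lambda>x. (partialI n I (m I) w x)\<^sup>2) \<in> borel_measurable \<mu>" by measurable
    fix x assume "x \<in> space \<mu>"
    then show "\<bar>(partialI n I (m I) w x)\<^sup>2\<bar> \<le> 2 * (C powr (q/2))\<^sup>2"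
      using dsetup.partial_sq_bnd[OF ds[OF I] wm wb] by simp
  qed
  have int2: "integrable \<mu> (\<lambda>x. \<bar>g x\<bar> powr (q - 2) * (partialI n I (m I) g x)\<^sup>2)" if I: "I \<in> \<I>" for I
  proof (rule integrable_bnd[OF P, where B="C powr (q - 2) * (2 * C\<^sup>2)"])
    note [measurable] = dsetup.partial_meas[OF ds[OF I] gm]
    show "(\<lambda>x. \<bar>g x\<bar> powr (q - 2) * (partialI n I (m I) g x)\<^sup>2) \<in> borel_measurable \<mu>" by measurable
    fix x assume x: "x \<in> space \<mu>"
    have "(partialI n I (m I) g x)\<^sup>2 \<le> 2 * C\<^sup>2" using dsetup.partial_sq_bnd[OF ds[OF I] gm bd x] .
    then show "\<bar>\<bar>g x\<bar> powr (q - 2) * (partialI n I (m I) g x)\<^sup>2\<bar> \<le> C powr (q - 2) * (2 * C\<^sup>2)"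
      using pb[of x] by (simp add: abs_mult) (intro mult_mono, auto)
  qed
  have "(\<integral>x. (grad_norm n \<I> m w x)\<^sup>2 \<partial>\<mu>) = (\<integral>x. (\<Sum>I\<in>\<I>. (partialI n I (m I) w x)\<^sup>2) \<partial>\<mu>)"
    unfolding grad_sq ..
  also have "\<dots> = (\<Sum>I\<in>\<I>. (\<integral>x. (partialI n I (m I) w x)\<^sup>2 \<partial>\<mu>))"
    by (rule Bochner_Integration.integral_sum[where f="\<lambda>I x. (partialI n I (m I) w x)\<^sup>2"]) (rule int1)
  also have "\<dots> \<le> (\<Sum>I\<in>\<I>. q\<^sup>2 / 2 * (\<integral>x. \<bar>g x\<bar> powr (q - 2) * (partialI n I (m I) g x)\<^sup>2 \<partial>\<mu>))"
    by (rule sum_mono) (unfold w_def, rule dsetup.K1[OF ds gm bd q])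
  also have "\<dots> = q\<^sup>2 / 2 * (\<Sum>I\<in>\<I>. (\<integral>x. \<bar>g x\<bar> powr (q - 2) * (partialI n I (m I) g x)\<^sup>2 \<partial>\<mu>))"
    by (simp add: sum_distrib_left)
  also have "(\<Sum>I\<in>\<I>. (\<integral>x. \<bar>g x\<bar> powr (q - 2) * (partialI n I (m I) g x)\<^sup>2 \<partial>\<mu>))
      = (\<integral>x. (\<Sum>I\<in>\<I>. \<bar>g x\<bar> powr (q - 2) * (partialI n I (m I) g x)\<^sup>2) \<partial>\<mu>)"
    by (rule Bochner_Integration.integral_sum[where f="\<lambda>I x. \<bar>g x\<bar> powr (q - 2) * (partialI n I (m I) g x)\<^sup>2", symmetric]) (rule int2)
  also have "\<dots> = (\<integral>x. \<bar>g x\<bar> powr (q - 2) * (grad_norm n \<I> m g x)\<^sup>2 \<partial>\<mu>)"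
    unfolding grad_sq by (simp add: sum_distrib_left)
  finally show ?thesis unfolding w_def .
qed

end

lemma sq_powr: "0 \<le> (t::real) \<Longrightarrow> (t\<^sup>2) powr r = t powr (2 * r)"
  by (cases "t = 0") (simp_all add: powr_powr[symmetric] powr_realpow)

lemma powr_sq: "0 \<le> (t::real) \<Longrightarrow> (t powr r)\<^sup>2 = t powr (2 * r)"
  by (cases "t = 0") (simp_all add: power2_eq_square powr_add[symmetric])

context msetup begin

definition "Db = sqrt (card \<I> * (2 * C\<^sup>2))"

lemma D_bnd: assumes x: "x \<in> space \<mu>" shows "grad_norm n \<I> m g x \<le> Db"
proof -
  have "(grad_norm n \<I> m g x)\<^sup>2 \<le> card \<I> * (2 * C\<^sup>2)" by (rule grad_sq_bnd[OF gm bd x])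
  then show ?thesis unfolding Db_def using grad_nonneg by (intro real_le_rsqrt) auto
qed

lemma Dm: "grad_norm n \<I> m g \<in> borel_measurable \<mu>" by (rule grad_meas[OF gm])

lemma L2:
  assumes q: "2 < q"
  shows "Ent \<mu> (\<lambda>x. \<bar>g x\<bar> powr q) \<le> \<sigma>2 * q\<^sup>2 * (\<integral>x. \<bar>g x\<bar> powr q \<partial>\<mu>) powr ((q - 2) / q)
            * (\<integral>x. (grad_norm n \<I> m g x) powr q \<partial>\<mu>) powr (2 / q)"
proof -
  define w where "w = (\<lambda>x. \<bar>g x\<bar> powr (q/2))"
  define D where "D = grad_norm n \<I> m g"
  note [measurable] = gm Dm[folded D_def]
  have D0: "0 \<le> D x" for x unfolding D_def by (rule grad_nonneg)
  have Db: "D x \<le> Db" if "x \<in> space \<mu>" for x unfolding D_def by (rule D_bnd[OF that])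
  have Db0: "0 \<le> Db" unfolding Db_def by simp
  have wm: "w \<in> borel_measurable \<mu>" unfolding w_def by measurable
  have wb: "\<bar>w x\<bar> \<le> C powr (q/2)" for x
    unfolding w_def using bd[of x] q by (auto intro!: powr_mono2)
  have Lw: "Linfty \<mu> w" unfolding Linfty_def using wm wb by auto
  have w2: "(w x)\<^sup>2 = \<bar>g x\<bar> powr q" for x unfolding w_def by (simp add: powr_sq)
  have "Ent \<mu> (\<lambda>x. \<bar>g x\<bar> powr q) = Ent \<mu> (\<lambda>x. (w x)\<^sup>2)" by (simp add: w2)
  also have "\<dots> \<le> 2 * \<sigma>2 * (\<integral>x. (grad_norm n \<I> m w x)\<^sup>2 \<partial>\<mu>)"
    using lsi Lw unfolding LSI_def by blast
  also have "\<dots> \<le> 2 * \<sigma>2 * (q\<^sup>2 / 2 * (\<integral>x. \<bar>g x\<bar> powr (q - 2) * (D x)\<^sup>2 \<partial>\<mu>))"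
    using L1[of q] q \<sigma> unfolding w_def D_def by (intro mult_left_mono) auto
  also have "(\<integral>x. \<bar>g x\<bar> powr (q - 2) * (D x)\<^sup>2 \<partial>\<mu>)
      \<le> (\<integral>x. (\<bar>g x\<bar> powr (q - 2)) powr (q / (q - 2)) \<partial>\<mu>) powr (1 / (q / (q - 2)))
        * (\<integral>x. ((D x)\<^sup>2) powr (q / 2) \<partial>\<mu>) powr (1 / (q / 2))"
  proof (rule holder[OF P])
    show "(\<lambda>x. \<bar>g x\<bar> powr (q - 2)) \<in> borel_measurable \<mu>" by measurable
    show "(\<lambda>x. (D x)\<^sup>2) \<in> borel_measurable \<mu>" by measurable
    show "1 < q / (q - 2)" "1 < q / 2" "1 / (q / (q - 2)) + 1 / (q / 2) = 1" using q by (auto simp: field_simps)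
    show "integrable \<mu> (\<lambda>x. (\<bar>g x\<bar> powr (q - 2)) powr (q / (q - 2)))"
      by (rule integrable_bnd[OF P, where B="C powr q"]) (measurable, use bd q in \<open>auto simp: powr_powr intro!: powr_mono2\<close>)
    show "integrable \<mu> (\<lambda>x. ((D x)\<^sup>2) powr (q / 2))"
      by (rule integrable_bnd[OF P, where B="Db powr q"]) (measurable, use D0 Db q in \<open>auto simp: sq_powr intro!: powr_mono2\<close>)
    show "integrable \<mu> (\<lambda>x. \<bar>g x\<bar> powr (q - 2) * (D x)\<^sup>2)"
    proof (rule integrable_bnd[OF P, where B="C powr (q - 2) * Db\<^sup>2"])
      show "(\<lambda>x. \<bar>g x\<bar> powr (q - 2) * (D x)\<^sup>2) \<in> borel_measurable \<mu>" by measurable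
      fix x assume x: "x \<in> space \<mu>"
      have "\<bar>g x\<bar> powr (q - 2) \<le> C powr (q - 2)" using bd[of x] q by (auto intro!: powr_mono2)
      moreover have "(D x)\<^sup>2 \<le> Db\<^sup>2" using D0[of x] Db[OF x] by (intro power_mono) auto
      ultimately show "\<bar>\<bar>g x\<bar> powr (q - 2) * (D x)\<^sup>2\<bar> \<le> C powr (q - 2) * Db\<^sup>2"
        by (simp add: abs_mult) (intro mult_mono, auto)
    qed
  qed (auto simp: D0)
  also have "(\<integral>x. (\<bar>g x\<bar> powr (q - 2)) powr (q / (q - 2)) \<partial>\<mu>) = (\<integral>x. \<bar>g x\<bar> powr q \<partial>\<mu>)"
    using q by (simp add: powr_powr)
  also have "(\<integral>x. ((D x)\<^sup>2) powr (q / 2) \<partial>\<mu>) = (\<integral>x. D x powr q \<partial>\<mu>)"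
    using D0 by (simp add: sq_powr)
  finally show ?thesis
    using q \<sigma> unfolding D_def by (simp add: field_simps mult_left_mono)
qed

end

context msetup begin

lemma L3:
  "Ent \<mu> (\<lambda>x. \<bar>g x\<bar> powr q) = q * (\<integral>x. \<bar>g x\<bar> powr q * ln \<bar>g x\<bar> \<partial>\<mu>)
      - (\<integral>x. \<bar>g x\<bar> powr q \<partial>\<mu>) * ln (\<integral>x. \<bar>g x\<bar> powr q \<partial>\<mu>)"
proof -
  have "(\<lambda>x. \<bar>g x\<bar> powr q * ln (\<bar>g x\<bar> powr q)) = (\<lambda>x. q * (\<bar>g x\<bar> powr q * ln \<bar>g x\<bar>))"
    by (rule ext) simp
  then show ?thesis unfolding Ent_def by simp
qed

lemma lyap:
  assumes z: "2 < z" "z < p"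
  shows "(\<integral>x. (grad_norm n \<I> m g x) powr z \<partial>\<mu>) powr (2 / z) \<le> (\<integral>x. (grad_norm n \<I> m g x) powr p \<partial>\<mu>) powr (2 / p)"
proof -
  define D where "D = grad_norm n \<I> m g"
  note [measurable] = Dm[folded D_def]
  interpret prob_space \<mu> by (rule P)
  have D0: "0 \<le> D x" for x unfolding D_def by (rule grad_nonneg)
  have Db: "D x \<le> Db" if "x \<in> space \<mu>" for x unfolding D_def by (rule D_bnd[OF that])
  have Db0: "0 \<le> Db" unfolding Db_def by simp
  define Bz where "Bz = (\<integral>x. D x powr z \<partial>\<mu>)"
  define Bp where "Bp = (\<integral>x. D x powr p \<partial>\<mu>)"
  have Bz0: "0 \<le> Bz" unfolding Bz_def by (intro integral_nonneg_AE) simp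
  have Bp0: "0 \<le> Bp" unfolding Bp_def by (intro integral_nonneg_AE) simp
  have "(\<integral>x. D x powr z * 1 \<partial>\<mu>) \<le> (\<integral>x. (D x powr z) powr (p / z) \<partial>\<mu>) powr (1 / (p / z))
        * (\<integral>x. (1::real) powr (p / (p - z)) \<partial>\<mu>) powr (1 / (p / (p - z)))"
  proof (rule holder[OF P])
    show "1 < p / z" "1 < p / (p - z)" "1 / (p / z) + 1 / (p / (p - z)) = 1" using z by (auto simp: field_simps)
    show "integrable \<mu> (\<lambda>x. (D x powr z) powr (p / z))"
      by (rule integrable_bnd[OF P, where B="Db powr p"]) (measurable, use D0 Db z in \<open>auto simp: powr_powr intro!: powr_mono2\<close>)
    show "integrable \<mu> (\<lambda>x. D x powr z * 1)"
      by (rule integrable_bnd[OF P, where B="Db powr z"]) (measurable, use D0 Db z in \<open>auto intro!: powr_mono2\<close>)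
  qed (auto simp: D0)
  also have "(\<integral>x. (D x powr z) powr (p / z) \<partial>\<mu>) = Bp"
    unfolding Bp_def using z by (simp add: powr_powr)
  finally have "Bz \<le> Bp powr (z / p)" unfolding Bz_def by (simp add: prob_space)
  then have "Bz powr (2 / z) \<le> (Bp powr (z / p)) powr (2 / z)"
    using Bz0 z by (intro powr_mono2) auto
  also have "\<dots> = Bp powr (2 / p)" using z by (simp add: powr_powr)
  finally show ?thesis unfolding Bz_def Bp_def D_def .
qed

end

context msetup begin

lemma core:
  assumes p: "2 \<le> p"
  shows "(Lp_norm \<mu> p g)\<^sup>2 - (Lp_norm \<mu> 2 g)\<^sup>2 \<le> 2 * \<sigma>2 * (p - 2) * (Lp_norm \<mu> p (grad_norm n \<I> m g))\<^sup>2"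
proof -
  interpret prob_space \<mu> by (rule P)
  define F where "F q = (\<integral>x. \<bar>g x\<bar> powr q \<partial>\<mu>)" for q
  define F' where "F' q = (\<integral>x. \<bar>g x\<bar> powr q * ln \<bar>g x\<bar> \<partial>\<mu>)" for q
  define D where "D = grad_norm n \<I> m g"
  define Bp where "Bp = (\<integral>x. D x powr p \<partial>\<mu>)"
  note [measurable] = gm
  have D0: "0 \<le> D x" for x unfolding D_def by (rule grad_nonneg)
  have F0: "0 \<le> F q" for q unfolding F_def by (intro integral_nonneg_AE) simp
  have Bp0: "0 \<le> Bp" unfolding Bp_def by (intro integral_nonneg_AE) simp
  have LpF: "(Lp_norm \<mu> q g)\<^sup>2 = F q powr (2 / q)" for q
    unfolding Lp_norm_def F_def[symmetric] using powr_sq[OF F0[of q], of "1/q"] by simp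
  have LpD: "(Lp_norm \<mu> p D)\<^sup>2 = Bp powr (2 / p)"
    unfolding Lp_norm_def Bp_def using powr_sq[OF integral_nonneg_AE[of "\<lambda>x. D x powr p" \<mu>], of "1/p"] D0
    by simp
  have R0: "0 \<le> 2 * \<sigma>2 * (p - 2) * (Lp_norm \<mu> p D)\<^sup>2" using \<sigma> p by simp
  show ?thesis
  proof (cases "p = 2")
    case True then show ?thesis using \<sigma> by simp
  next
    case False
    then have p2: "2 < p" using p by simp
    show ?thesis
    proof (cases "AE x in \<mu>. g x = 0")
      case True
      have "F q = 0" for q unfolding F_def
        by (rule integral_eq_zero_AE) (use True in \<open>auto elim: AE_mp intro!: AE_I2\<close>)
      then show ?thesis using R0 unfolding LpF D_def by simp
    next
      case False
      have intq: "integrable \<mu> (\<lambda>x. \<bar>g x\<bar> powr q)" if "0 \<le> q" for q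
        by (rule integrable_bnd[OF P, where B="C powr q"]) (measurable, use bd that in \<open>auto intro!: powr_mono2\<close>)
      have Fp: "0 < F q" if q: "0 < q" for q
      proof (rule ccontr)
        assume "\<not> 0 < F q"
        then have "F q = 0" using F0[of q] by simp
        then have "AE x in \<mu>. \<bar>g x\<bar> powr q = 0"
          using integral_nonneg_eq_0_iff_AE[OF intq] q unfolding F_def by simp
        then have "AE x in \<mu>. g x = 0" by (rule AE_mp) (intro AE_I2 impI, simp)
        with False show False by simp
      qed
      define Gx where "Gx q = exp (2 / q * ln (F q))" for q
      define Gd where "Gd q = Gx q * (- (2 / q\<^sup>2) * ln (F q) + 2 / q * (F' q / F q))" for q
      have dG: "(Gx has_real_derivative Gd q) (at q)" if q: "2 \<le> q" for q
      proof -
        have q0: "0 < q" using q by simp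
        have dF: "(F has_real_derivative F' q) (at q)"
          unfolding F_def[abs_def] F'_def by (rule deriv_F[OF P gm bd q])
        have d1: "((\<lambda>q. ln (F q)) has_real_derivative inverse (F q) * F' q) (at q)"
          by (rule DERIV_chain2[OF DERIV_ln[OF Fp[OF q0]] dF])
        have d2: "((\<lambda>q. 2 / q) has_real_derivative (- (2 / q\<^sup>2))) (at q)"
          using q0 by (auto intro!: derivative_eq_intros simp: power2_eq_square field_simps)
        have d3: "((\<lambda>q. 2 / q * ln (F q)) has_real_derivative
            (- (2 / q\<^sup>2)) * ln (F q) + inverse (F q) * F' q * (2 / q)) (at q)"
          by (rule DERIV_mult[OF d2 d1])
        have d4: "(Gx has_real_derivative exp (2 / q * ln (F q)) * ((- (2 / q\<^sup>2)) * ln (F q) + inverse (F q) * F' q * (2 / q))) (at q)"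
          unfolding Gx_def[abs_def] by (rule DERIV_chain2[OF DERIV_exp d3])
        show ?thesis
          by (rule DERIV_cong[OF d4]) (simp add: Gd_def Gx_def field_simps)
      qed
      obtain z where z: "2 < z" "z < p" "Gx p - Gx 2 = (p - 2) * Gd z"
        using MVT2[OF p2, of Gx Gd] dG by auto
      have Gx_eq: "Gx q = F q powr (2 / q)" if "0 < q" for q
        unfolding Gx_def using Fp[OF that] by (simp add: powr_def)
      have Fz: "0 < F z" using Fp z by simp
      define Bz where "Bz = (\<integral>x. D x powr z \<partial>\<mu>)"
      have Bz0: "0 \<le> Bz" unfolding Bz_def by (intro integral_nonneg_AE) simp
      have Ent_z: "Ent \<mu> (\<lambda>x. \<bar>g x\<bar> powr z) = z * F' z - F z * ln (F z)"
        unfolding F_def F'_def by (rule L3)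
      have L2z: "z * F' z - F z * ln (F z) \<le> \<sigma>2 * z\<^sup>2 * F z powr ((z - 2) / z) * Bz powr (2 / z)"
        using L2[OF z(1)] unfolding Ent_z F_def[symmetric] Bz_def D_def .
      define Qz where "Qz = F z powr (2 / z) / F z"
      have Qz0: "0 < Qz" unfolding Qz_def using Fz by simp
      have Gdz: "Gd z = 2 / z\<^sup>2 * Qz * (z * F' z - F z * ln (F z))"
        unfolding Gd_def Qz_def Gx_eq[of z] using z Fz by (simp add: Gx_eq field_simps power2_eq_square)
      have QF: "Qz * F z powr ((z - 2) / z) = 1"
      proof -
        have "F z powr (2 / z) * F z powr ((z - 2) / z) = F z powr (2 / z + (z - 2) / z)"
          by (simp add: powr_add)
        also have "2 / z + (z - 2) / z = 1" using z by (simp add: field_simps)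
        finally show ?thesis unfolding Qz_def using Fz by simp
      qed
      have "Gd z \<le> 2 / z\<^sup>2 * Qz * (\<sigma>2 * z\<^sup>2 * F z powr ((z - 2) / z) * Bz powr (2 / z))"
        unfolding Gdz using Qz0 z L2z by (intro mult_left_mono) auto
      also have "\<dots> = 2 * \<sigma>2 * (Qz * F z powr ((z - 2) / z)) * Bz powr (2 / z)"
        using z by (simp add: field_simps power2_eq_square)
      also have "\<dots> = 2 * \<sigma>2 * Bz powr (2 / z)" unfolding QF by simp
      also have "\<dots> \<le> 2 * \<sigma>2 * Bp powr (2 / p)"
        using lyap[OF z(1,2)] \<sigma> unfolding Bz_def Bp_def D_def by simp
      finally have Gdb: "Gd z \<le> 2 * \<sigma>2 * Bp powr (2 / p)" .
      have "(Lp_norm \<mu> p g)\<^sup>2 - (Lp_norm \<mu> 2 g)\<^sup>2 = Gx p - Gx 2"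
        unfolding LpF using Gx_eq[of p] Gx_eq[of 2] p2 by simp
      also have "\<dots> = (p - 2) * Gd z" by (rule z(3))
      also have "\<dots> \<le> (p - 2) * (2 * \<sigma>2 * Bp powr (2 / p))"
        using Gdb p2 by (intro mult_left_mono) auto
      also have "\<dots> = 2 * \<sigma>2 * (p - 2) * (Lp_norm \<mu> p D)\<^sup>2" unfolding LpD by simp
      finally show ?thesis unfolding D_def .
    qed
  qed
qed

end

context dsetup begin

lemma KK_prob: assumes x: "x \<in> space \<mu>" shows "prob_space (m (xbar n I x) \<Otimes>\<^sub>M m (xbar n I x))"
proof -
  interpret pair_prob_space "m (xbar n I x)" "m (xbar n I x)"
    using m_prob[OF xbar_space[OF x]]
    by (simp add: pair_prob_space_def pair_sigma_finite_def prob_space_imp_sigma_finite)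
  show ?thesis by (rule P.prob_space_axioms)
qed

lemma hI_bnd:
  fixes u :: "(nat \<Rightarrow> 'a) \<Rightarrow> real"
  assumes u: "u \<in> borel_measurable \<mu>" and bd: "\<And>x. \<bar>u x\<bar> \<le> B" and x: "x \<in> space \<mu>"
  shows "\<bar>hI n I m u x\<bar> \<le> 2 * B"
proof -
  define \<Phi> where "\<Phi> w = ereal \<bar>u (glue n I x (fst w)) - u (glue n I x (snd w))\<bar>" for w
  define E where "E = esssup (m (xbar n I x) \<Otimes>\<^sub>M m (xbar n I x)) \<Phi>"
  interpret pp: prob_space "m (xbar n I x) \<Otimes>\<^sub>M m (xbar n I x)" by (rule KK_prob[OF x])
  have sl: "\<Phi> \<in> borel_measurable (m (xbar n I x) \<Otimes>\<^sub>M m (xbar n I x))"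
    unfolding \<Phi>_def using Phi_slice[OF u x] .
  have "E \<le> ereal (2 * B)"
    unfolding E_def
  proof (rule esssup_I[OF sl], intro AE_I2)
    fix w show "\<Phi> w \<le> ereal (2 * B)"
      unfolding \<Phi>_def using bd[of "glue n I x (fst w)"] bd[of "glue n I x (snd w)"] by simp
  qed
  moreover have "AE w in m (xbar n I x) \<Otimes>\<^sub>M m (xbar n I x). 0 \<le> E"
    using esssup_AE[of \<Phi> "m (xbar n I x) \<Otimes>\<^sub>M m (xbar n I x)"] unfolding E_def[symmetric]
  proof (rule AE_mp, intro AE_I2 impI)
    fix w assume "\<Phi> w \<le> E"
    moreover have "0 \<le> \<Phi> w" unfolding \<Phi>_def by simp
    ultimately show "0 \<le> E" by (rule order.trans[rotated])
  qed
  then have "0 \<le> E" by simp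
  ultimately obtain e where e: "E = ereal e" "0 \<le> e" "e \<le> 2 * B" by (cases E) auto
  have "hI n I m u x = 1 / sqrt 2 * e"
    unfolding hI_def split_beta' using e unfolding E_def \<Phi>_def by simp
  moreover have "1 / sqrt 2 * e \<le> 1 * e"
  proof (rule mult_right_mono[OF _ e(2)])
    have "1 \<le> sqrt 2" by simp
    then show "1 / sqrt 2 \<le> 1" by (simp add: divide_le_eq)
  qed
  ultimately show ?thesis using e by simp
qed

end

context msetup begin

lemma h_sq: "(h_norm n \<I> m u x)\<^sup>2 = (\<Sum>I\<in>\<I>. (hI n I (m I) u x)\<^sup>2)"
proof -
  have "0 \<le> (\<Sum>I\<in>\<I>. (hI n I (m I) u x)\<^sup>2)" by (rule sum_nonneg) simp
  then show ?thesis unfolding h_norm_def by simp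
qed

lemma h_nonneg: "0 \<le> h_norm n \<I> m u x"
proof -
  have "0 \<le> (\<Sum>I\<in>\<I>. (hI n I (m I) u x)\<^sup>2)" by (rule sum_nonneg) simp
  then show ?thesis unfolding h_norm_def by simp
qed

lemma h_meas:
  fixes u :: "(nat \<Rightarrow> 'a) \<Rightarrow> real"
  assumes u: "u \<in> borel_measurable \<mu>"
  shows "h_norm n \<I> m u \<in> borel_measurable \<mu>"
proof -
  have [measurable]: "hI n I (m I) u \<in> borel_measurable \<mu>" if "I \<in> \<I>" for I
    using dsetup.hI_meas[OF ds[OF that] u] .
  show ?thesis unfolding h_norm_def[abs_def] by measurable
qed

lemma h_bnd:
  assumes x: "x \<in> space \<mu>"
  shows "h_norm n \<I> m g x \<le> sqrt (card \<I> * (2 * C)\<^sup>2)"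
proof -
  have "(\<Sum>I\<in>\<I>. (hI n I (m I) g x)\<^sup>2) \<le> (\<Sum>I\<in>\<I>. (2 * C)\<^sup>2)"
  proof (rule sum_mono)
    fix I assume I: "I \<in> \<I>"
    have "\<bar>hI n I (m I) g x\<bar> \<le> 2 * C" by (rule dsetup.hI_bnd[OF ds[OF I] gm bd x])
    then have "\<bar>hI n I (m I) g x\<bar>\<^sup>2 \<le> (2 * C)\<^sup>2" by (intro power_mono) auto
    then show "(hI n I (m I) g x)\<^sup>2 \<le> (2 * C)\<^sup>2" by simp
  qed
  then show ?thesis unfolding h_norm_def by simp
qed

lemma grad_le_h: "AE x in \<mu>. grad_norm n \<I> m g x \<le> h_norm n \<I> m g x"
proof -
  have "AE x in \<mu>. \<forall>I\<in>\<I>. (partialI n I (m I) g x)\<^sup>2 \<le> (hI n I (m I) g x)\<^sup>2"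
    by (rule AE_finite_allI[OF fin]) (rule dsetup.partial_le_h[OF ds gm bd])
  then show ?thesis
  proof (rule AE_mp, intro AE_I2 impI)
    fix x assume "\<forall>I\<in>\<I>. (partialI n I (m I) g x)\<^sup>2 \<le> (hI n I (m I) g x)\<^sup>2"
    then have "(\<Sum>I\<in>\<I>. (partialI n I (m I) g x)\<^sup>2) \<le> (\<Sum>I\<in>\<I>. (hI n I (m I) g x)\<^sup>2)"
      by (intro sum_mono) auto
    then show "grad_norm n \<I> m g x \<le> h_norm n \<I> m g x"
      unfolding grad_norm_def h_norm_def by simp
  qed
qed

lemma grad_h_Lp:
  assumes p: "2 \<le> p"
  shows "(Lp_norm \<mu> p (grad_norm n \<I> m g))\<^sup>2 \<le> (Lp_norm \<mu> p (h_norm n \<I> m g))\<^sup>2"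
proof -
  define D where "D = grad_norm n \<I> m g"
  define H where "H = h_norm n \<I> m g"
  note [measurable] = Dm[folded D_def] h_meas[OF gm, folded H_def]
  have D0: "0 \<le> D x" for x unfolding D_def by (rule grad_nonneg)
  have H0: "0 \<le> H x" for x unfolding H_def by (rule h_nonneg)
  have Db: "D x \<le> Db" if "x \<in> space \<mu>" for x unfolding D_def by (rule D_bnd[OF that])
  have Hb: "H x \<le> sqrt (card \<I> * (2 * C)\<^sup>2)" if "x \<in> space \<mu>" for x unfolding H_def by (rule h_bnd[OF that])
  have iD: "integrable \<mu> (\<lambda>x. \<bar>D x\<bar> powr p)"
    by (rule integrable_bnd[OF P, where B="Db powr p"]) (measurable, use D0 Db p in \<open>auto intro!: powr_mono2\<close>)
  have iH: "integrable \<mu> (\<lambda>x. \<bar>H x\<bar> powr p)"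
    by (rule integrable_bnd[OF P, where B="sqrt (card \<I> * (2 * C)\<^sup>2) powr p"])
       (measurable, use H0 Hb p in \<open>auto intro!: powr_mono2\<close>)
  have "(\<integral>x. \<bar>D x\<bar> powr p \<partial>\<mu>) \<le> (\<integral>x. \<bar>H x\<bar> powr p \<partial>\<mu>)"
  proof (rule integral_mono_AE[OF iD iH])
    show "AE x in \<mu>. \<bar>D x\<bar> powr p \<le> \<bar>H x\<bar> powr p"
      using grad_le_h unfolding D_def[symmetric] H_def[symmetric]
      by (rule AE_mp) (intro AE_I2 impI, use D0 H0 p in \<open>auto intro!: powr_mono2\<close>)
  qed
  then have "Lp_norm \<mu> p D \<le> Lp_norm \<mu> p H"
    unfolding Lp_norm_def using p by (intro powr_mono2) (auto intro!: integral_nonneg_AE)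
  moreover have "0 \<le> Lp_norm \<mu> p D" unfolding Lp_norm_def by simp
  ultimately show ?thesis unfolding D_def H_def by (intro power_mono) auto
qed

end

lemma absp_meas: "(u::'b \<Rightarrow> real) \<in> borel_measurable M \<Longrightarrow> (\<lambda>x. \<bar>u x\<bar> powr (q::real)) \<in> borel_measurable M"
  by measurable


theorem proposition2p4:
  fixes X :: "nat \<Rightarrow> 'a topology" and n :: nat and \<mu> :: "(nat \<Rightarrow> 'a) measure"
    and \<I> :: "nat set set" and m :: "nat set \<Rightarrow> (nat \<Rightarrow> 'a) \<Rightarrow> (nat \<Rightarrow> 'a) measure"
    and \<sigma>2 :: real and f :: "(nat \<Rightarrow> 'a) \<Rightarrow> real" and p :: real
  assumes "\<forall>i\<in>{1..n}. Polish_top (X i)"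
    and "prob_space \<mu>" and "sets \<mu> = sets (prodM X {1..n})"
    and "\<I> \<subseteq> Pow {1..n}"
    and "\<forall>I\<in>\<I>. is_disintegration X n \<mu> I (m I)"
    and "LSI n \<mu> \<I> m \<sigma>2" and "\<sigma>2 > 0"
    and "Linfty \<mu> f" and "p \<ge> 2"
  shows "(Lp_norm \<mu> p f)\<^sup>2 - (Lp_norm \<mu> 2 f)\<^sup>2 \<le> 2 * \<sigma>2 * (p - 2) * (Lp_norm \<mu> p (grad_norm n \<I> m f))\<^sup>2 \<and>
         (Lp_norm \<mu> p f)\<^sup>2 - (Lp_norm \<mu> 2 f)\<^sup>2 \<le> 2 * \<sigma>2 * (p - 2) * (Lp_norm \<mu> p (h_norm n \<I> m f))\<^sup>2"
proof -
  note A = assms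
  obtain C0 where fm: "f \<in> borel_measurable \<mu>" and ae: "AE x in \<mu>. \<bar>f x\<bar> \<le> C0"
    using A(8) unfolding Linfty_def by blast
  define C where "C = \<bar>C0\<bar>"
  define g where "g x = (if \<bar>f x\<bar> \<le> C then f x else 0)" for x
  note [measurable] = fm
  have gm: "g \<in> borel_measurable \<mu>" unfolding g_def[abs_def] by measurable
  have C0: "0 \<le> C" unfolding C_def by simp
  have bd: "\<bar>g x\<bar> \<le> C" for x unfolding g_def using C0 by simp
  have aeq: "AE x in \<mu>. f x = g x"
  proof (rule AE_mp[OF ae], intro AE_I2 impI)
    fix x assume "\<bar>f x\<bar> \<le> C0"
    then have "\<bar>f x\<bar> \<le> C" unfolding C_def by simp
    then show "f x = g x" unfolding g_def by simp
  qed
  have ms: "msetup X n \<mu> \<I> m \<sigma>2 g C"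
    by (rule msetup.intro[OF A(2) A(3) A(4) A(5) A(6) A(7) gm bd])
  note fin = msetup.fin[OF ms] and ds = msetup.ds[OF ms]
  note grad_meas = msetup.grad_meas[OF ms] and h_meas = msetup.h_meas[OF ms]
  note core = msetup.core[OF ms] and grad_h_Lp = msetup.grad_h_Lp[OF ms]
  have e1: "Lp_norm \<mu> q f = Lp_norm \<mu> q g" for q
  proof -
    have "(\<integral>x. \<bar>f x\<bar> powr q \<partial>\<mu>) = (\<integral>x. \<bar>g x\<bar> powr q \<partial>\<mu>)"
    proof (rule integral_cong_AE[OF absp_meas[OF fm] absp_meas[OF gm]])
      show "AE x in \<mu>. \<bar>f x\<bar> powr q = \<bar>g x\<bar> powr q" using aeq by (rule AE_mp) (intro AE_I2 impI, simp)
    qed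
    then show ?thesis unfolding Lp_norm_def by simp
  qed
  have e2: "Lp_norm \<mu> p (grad_norm n \<I> m f) = Lp_norm \<mu> p (grad_norm n \<I> m g)"
  proof -
    have "AE x in \<mu>. \<forall>I\<in>\<I>. partialI n I (m I) f x = partialI n I (m I) g x"
      by (rule AE_finite_allI[OF fin]) (rule dsetup.trunc_partial[OF ds fm gm aeq])
    then have ae2: "AE x in \<mu>. grad_norm n \<I> m f x = grad_norm n \<I> m g x"
      by (rule AE_mp) (intro AE_I2 impI, simp add: grad_norm_def)
    have "(\<integral>x. \<bar>grad_norm n \<I> m f x\<bar> powr p \<partial>\<mu>) = (\<integral>x. \<bar>grad_norm n \<I> m g x\<bar> powr p \<partial>\<mu>)"
    proof (rule integral_cong_AE[OF absp_meas[OF grad_meas[OF fm]] absp_meas[OF grad_meas[OF gm]]])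
      show "AE x in \<mu>. \<bar>grad_norm n \<I> m f x\<bar> powr p = \<bar>grad_norm n \<I> m g x\<bar> powr p"
        using ae2 by (rule AE_mp) (intro AE_I2 impI, simp)
    qed
    then show ?thesis unfolding Lp_norm_def by simp
  qed
  have e3: "Lp_norm \<mu> p (h_norm n \<I> m f) = Lp_norm \<mu> p (h_norm n \<I> m g)"
  proof -
    have "AE x in \<mu>. \<forall>I\<in>\<I>. hI n I (m I) f x = hI n I (m I) g x"
      by (rule AE_finite_allI[OF fin]) (rule dsetup.trunc_h[OF ds fm gm aeq])
    then have ae2: "AE x in \<mu>. h_norm n \<I> m f x = h_norm n \<I> m g x"
      by (rule AE_mp) (intro AE_I2 impI, simp add: h_norm_def)
    have "(\<integral>x. \<bar>h_norm n \<I> m f x\<bar> powr p \<partial>\<mu>) = (\<integral>x. \<bar>h_norm n \<I> m g x\<bar> powr p \<partial>\<mu>)"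
    proof (rule integral_cong_AE[OF absp_meas[OF h_meas[OF fm]] absp_meas[OF h_meas[OF gm]]])
      show "AE x in \<mu>. \<bar>h_norm n \<I> m f x\<bar> powr p = \<bar>h_norm n \<I> m g x\<bar> powr p"
        using ae2 by (rule AE_mp) (intro AE_I2 impI, simp)
    qed
    then show ?thesis unfolding Lp_norm_def by simp
  qed
  have c1: "(Lp_norm \<mu> p g)\<^sup>2 - (Lp_norm \<mu> 2 g)\<^sup>2 \<le> 2 * \<sigma>2 * (p - 2) * (Lp_norm \<mu> p (grad_norm n \<I> m g))\<^sup>2"
    by (rule core) (use A(9) in simp)
  have c2: "(Lp_norm \<mu> p (grad_norm n \<I> m g))\<^sup>2 \<le> (Lp_norm \<mu> p (h_norm n \<I> m g))\<^sup>2"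
    by (rule grad_h_Lp) (use A(9) in simp)
  have k0: "0 \<le> 2 * \<sigma>2 * (p - 2)" using A(7,9) by simp
  have c3: "2 * \<sigma>2 * (p - 2) * (Lp_norm \<mu> p (grad_norm n \<I> m g))\<^sup>2
      \<le> 2 * \<sigma>2 * (p - 2) * (Lp_norm \<mu> p (h_norm n \<I> m g))\<^sup>2"
    by (rule mult_left_mono[OF c2 k0])
  show ?thesis unfolding e1 e2 e3 using c1 c3 by linarith
qed


end
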